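(* Let $N\ge2$ and $d_1,\dots,d_N\ge2$, and set $D=d_1\cdots d_N$, $B=\sum_{i_1,\dots,i_N\in\{0,1\}}d_1^{i_1}\cdots d_N^{i_N}$, and $C=\sum_{A|B'}(d_A+d_{B'})$. Then the Haar averages of the entangling power satisfy $$\langle\varepsilon_\tau\rangle_{O(D)}=2\left[1-\Big(\prod_{i=1}^N\frac{1}{d_i+1}\Big)\frac{2^N(D+1)-2B+\frac{BD-2^N}{2^{N-1}-1}C}{(D-1)(D+2)}\right]$$ and $$\langle\varepsilon_\tau\rangle_{U(D)}=2\left[1-\Big(\prod_{i=1}^N\frac{1}{d_i+1}\Big)\frac{BC}{(2^{N-1}-1)(D+1)}\right].$$
   Context: Consider $\mathcal{H}=\mathbb{C}^{d_1}\otimes\cdots\otimes\mathbb{C}^{d_N}$. The sum $\sum_{A|B'}$ runs over all $2^{N-1}-1$ unordered bipartitions of $\{1,\dots,N\}$ into disjoint nonempty sets $A,B'$, and $d_A=\prod_{i\in A}d_i$. For a pure state $|\psi\rangle$, $\tau_{A|B'}(|\psi\rangle)=2\big(1-\mathrm{Tr}(\mathrm{Tr}_{B'}|\psi\rangle\langle\psi|)^2\big)$, and the one-tangle is $\tau_1=\frac{1}{2^{N-1}-1}\sum_{A|B'}\tau_{A|B'}$. The entangling power of a unitary $U$ on $\mathcal{H}$ is $\varepsilon_\tau(U)=\langle\tau_1(U|\psi_1\rangle\cdots|\psi_N\rangle)\rangle$, averaged over product states with each $|\psi_i\rangle$ drawn independently from the uniform measure on the unit sphere of $\mathbb{C}^{d_i}$.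 $\langle\cdot\rangle_{O(D)}$ and $\langle\cdot\rangle_{U(D)}$ denote averages over the Haar measure on the orthogonal and unitary group of size $D$. *)

theory Defs
  imports "HOL-Probability.Probability"
begin

definition mats :: "'i set \<Rightarrow> ('i \<Rightarrow> 'i \<Rightarrow> 'a) set" where
  "mats I = PiE I (\<lambda>_. PiE I (\<lambda>_. UNIV))"

definition mat_space :: "'i set \<Rightarrow> ('i \<Rightarrow> 'i \<Rightarrow> 'a::topological_space) measure" where
  "mat_space I = PiM I (\<lambda>_. PiM I (\<lambda>_. borel))"

definition vec_space :: "'i set \<Rightarrow> ('i \<Rightarrow> 'a::topological_space) measure" where
  "vec_space I = PiM I (\<lambda>_. borel)"

definition matmul :: "'i set \<Rightarrow> ('i \<Rightarrow> 'i \<Rightarrow> 'a::comm_semiring_1) \<Rightarrow> ('i \<Rightarrow> 'i \<Rightarrow> 'a) \<Rightarrow> ('i \<Rightarrow> 'i \<Rightarrow> 'a)" where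
  "matmul I U V = (\<lambda>i\<in>I. \<lambda>j\<in>I. \<Sum>k\<in>I. U i k * V k j)"

definition matvec :: "'i set \<Rightarrow> ('i \<Rightarrow> 'i \<Rightarrow> 'a::comm_semiring_1) \<Rightarrow> ('i \<Rightarrow> 'a) \<Rightarrow> ('i \<Rightarrow> 'a)" where
  "matvec I U x = (\<lambda>i\<in>I. \<Sum>j\<in>I. U i j * x j)"

definition unitary_group :: "'i set \<Rightarrow> ('i \<Rightarrow> 'i \<Rightarrow> complex) set" where
  "unitary_group I = {U \<in> mats I. \<forall>i\<in>I. \<forall>j\<in>I.
      (\<Sum>k\<in>I. cnj (U k i) * U k j) = (if i = j then 1 else 0)}"

definition orthogonal_group :: "'i set \<Rightarrow> ('i \<Rightarrow> 'i \<Rightarrow> real) set" where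
  "orthogonal_group I = {U \<in> mats I. \<forall>i\<in>I. \<forall>j\<in>I.
      (\<Sum>k\<in>I. U k i * U k j) = (if i = j then 1 else 0)}"

definition haar_unitary :: "'i set \<Rightarrow> ('i \<Rightarrow> 'i \<Rightarrow> complex) measure \<Rightarrow> bool" where
  "haar_unitary I \<mu> \<longleftrightarrow> prob_space \<mu> \<and> sets \<mu> = sets (mat_space I) \<and>
     emeasure \<mu> (unitary_group I) = 1 \<and>
     (\<forall>V\<in>unitary_group I. distr \<mu> (mat_space I) (matmul I V) = \<mu>)"

definition haar_orthogonal :: "'i set \<Rightarrow> ('i \<Rightarrow> 'i \<Rightarrow> real) measure \<Rightarrow> bool" where
  "haar_orthogonal I \<mu> \<longleftrightarrow> prob_space \<mu> \<and> sets \<mu> = sets (mat_space I) \<and>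
     emeasure \<mu> (orthogonal_group I) = 1 \<and>
     (\<forall>V\<in>orthogonal_group I. distr \<mu> (mat_space I) (matmul I V) = \<mu>)"

definition unit_sphere_on :: "'i set \<Rightarrow> ('i \<Rightarrow> complex) set" where
  "unit_sphere_on I = {x \<in> PiE I (\<lambda>_. UNIV). (\<Sum>i\<in>I. (cmod (x i))\<^sup>2) = 1}"

definition uniform_sphere :: "'i set \<Rightarrow> ('i \<Rightarrow> complex) measure \<Rightarrow> bool" where
  "uniform_sphere I \<sigma> \<longleftrightarrow> prob_space \<sigma> \<and> sets \<sigma> = sets (vec_space I) \<and>
     emeasure \<sigma> (unit_sphere_on I) = 1 \<and>
     (\<forall>V\<in>unitary_group I. distr \<sigma> (vec_space I) (matvec I V) = \<sigma>)"

text \<open>Basis vectors are indexed by multi-indices x with x i < d i for i < N.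
  Sites are numbered 0..N-1.\<close>

definition sub_idx :: "(nat \<Rightarrow> nat) \<Rightarrow> nat set \<Rightarrow> (nat \<Rightarrow> nat) set" where
  "sub_idx d A = PiE A (\<lambda>i. {..<d i})"

definition basis_idx :: "nat \<Rightarrow> (nat \<Rightarrow> nat) \<Rightarrow> (nat \<Rightarrow> nat) set" where
  "basis_idx N d = sub_idx d {..<N}"

definition merge_idx :: "nat set \<Rightarrow> (nat \<Rightarrow> nat) \<Rightarrow> (nat \<Rightarrow> nat) \<Rightarrow> (nat \<Rightarrow> nat)" where
  "merge_idx A a b = (\<lambda>i. if i \<in> A then a i else b i)"

text \<open>Reduced density matrix Tr_{B'} |phi><phi| on the subsystem A (B' = complement).\<close>

definition rdm :: "nat \<Rightarrow> (nat \<Rightarrow> nat) \<Rightarrow> nat set \<Rightarrow> ((nat \<Rightarrow> nat) \<Rightarrow> complex)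
                    \<Rightarrow> (nat \<Rightarrow> nat) \<Rightarrow> (nat \<Rightarrow> nat) \<Rightarrow> complex" where
  "rdm N d A \<phi> a a' = (\<Sum>b\<in>sub_idx d ({..<N} - A).
       \<phi> (merge_idx A a b) * cnj (\<phi> (merge_idx A a' b)))"

definition purity :: "nat \<Rightarrow> (nat \<Rightarrow> nat) \<Rightarrow> nat set \<Rightarrow> ((nat \<Rightarrow> nat) \<Rightarrow> complex) \<Rightarrow> real" where
  "purity N d A \<phi> = Re (\<Sum>a\<in>sub_idx d A. \<Sum>a'\<in>sub_idx d A. rdm N d A \<phi> a a' * rdm N d A \<phi> a' a)"

definition tau_bip :: "nat \<Rightarrow> (nat \<Rightarrow> nat) \<Rightarrow> nat set \<Rightarrow> ((nat \<Rightarrow> nat) \<Rightarrow> complex) \<Rightarrow> real" where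
  "tau_bip N d A \<phi> = 2 * (1 - purity N d A \<phi>)"

text \<open>Unordered bipartitions A|B' of {0..N-1}: each represented once by the part containing 0.\<close>

definition bipartitions :: "nat \<Rightarrow> nat set set" where
  "bipartitions N = {A. A \<subseteq> {..<N} \<and> 0 \<in> A \<and> A \<noteq> {..<N}}"

definition one_tangle :: "nat \<Rightarrow> (nat \<Rightarrow> nat) \<Rightarrow> ((nat \<Rightarrow> nat) \<Rightarrow> complex) \<Rightarrow> real" where
  "one_tangle N d \<phi> = (1 / ((2::real) ^ (N - 1) - 1)) * (\<Sum>A\<in>bipartitions N. tau_bip N d A \<phi>)"

definition product_state :: "nat \<Rightarrow> (nat \<Rightarrow> nat \<Rightarrow> complex) \<Rightarrow> ((nat \<Rightarrow> nat) \<Rightarrow> complex)" where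
  "product_state N \<psi> = (\<lambda>x. \<Prod>i<N. \<psi> i (x i))"

definition entangling_power :: "nat \<Rightarrow> (nat \<Rightarrow> nat) \<Rightarrow> (nat \<Rightarrow> (nat \<Rightarrow> complex) measure)
     \<Rightarrow> ((nat \<Rightarrow> nat) \<Rightarrow> (nat \<Rightarrow> nat) \<Rightarrow> complex) \<Rightarrow> real" where
  "entangling_power N d \<sigma> U =
     (\<integral>\<psi>. one_tangle N d (matvec (basis_idx N d) U (product_state N \<psi>)) \<partial>(PiM {..<N} \<sigma>))"

end

theory Submission
  imports Defs
begin


definition mono :: "('i \<Rightarrow> complex) \<Rightarrow> 'i \<Rightarrow> 'i \<Rightarrow> 'i \<Rightarrow> 'i \<Rightarrow> complex" where
  "mono w i j k l = w i * cnj (w j) * w k * cnj (w l)"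

definition cmat :: "'i set \<Rightarrow> ('i \<Rightarrow> 'i \<Rightarrow> real) \<Rightarrow> 'i \<Rightarrow> 'i \<Rightarrow> complex" where
  "cmat I Q = (\<lambda>x\<in>I. \<lambda>y\<in>I. complex_of_real (Q x y))"

definition sw :: "'i \<Rightarrow> 'i \<Rightarrow> 'i \<Rightarrow> 'i" where
  "sw p q x = (if x = p then q else if x = q then p else x)"

lemma sum_if_eq:
  assumes "finite S" "x \<in> S"
  shows "(\<Sum>y\<in>S. if x = y then P else Q) = P + of_nat (card S - 1) * (Q::'a::comm_ring_1)"
proof -
  have "(\<Sum>y\<in>S. if x = y then P else Q) = (if x = x then P else Q) + (\<Sum>y\<in>S-{x}. if x = y then P else Q)"
    using assms by (simp add: sum.remove)
  also have "(\<Sum>y\<in>S-{x}. if x = y then P else Q) = (\<Sum>y\<in>S-{x}. Q)"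
    by (rule sum.cong) auto
  finally show ?thesis using assms by (simp add: card_Diff_singleton mult.commute)
qed

lemma borel_measurable_cnj'[measurable]:
  "f \<in> borel_measurable M \<Longrightarrow> (\<lambda>x. cnj (f x :: complex)) \<in> borel_measurable M"
  by (rule borel_measurable_continuous_on[where f=cnj]) (auto intro: continuous_on_cnj continuous_on_id)

lemma odd_witness:
  assumes "\<not>(i=j \<and> j=k \<and> k=l)" "\<not>(i=j \<and> k=l)" "\<not>(i=l \<and> j=k)" "\<not>(i=k \<and> j=l)"
  shows "(if i=i then -1 else 1) * (if j=i then -1 else 1) * (if k=i then -1 else 1) * (if l=i then -1 else 1) = (-1::complex)
   \<or> (if i=j then -1 else 1) * (if j=j then -1 else 1) * (if k=j then -1 else 1) * (if l=j then -1 else 1) = (-1::complex)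
   \<or> (if i=k then -1 else 1) * (if j=k then -1 else 1) * (if k=k then -1 else 1) * (if l=k then -1 else 1) = (-1::complex)"
proof (cases "i = j")
  case True
  show ?thesis
  proof (cases "k = i")
    case True then show ?thesis using assms \<open>i=j\<close> by auto
  next
    case False
    show ?thesis
    proof (cases "l = i")
      case True then show ?thesis using assms \<open>i=j\<close> False by auto
    next
      case False2: False
      then show ?thesis using assms \<open>i=j\<close> False by auto
    qed
  qed
next
  case False
  show ?thesis
  proof (cases "i = k")
    case True
    show ?thesis
    proof (cases "l = i")
      case True then show ?thesis using assms \<open>i=k\<close> False by auto
    next
      case False2: False then show ?thesis using assms \<open>i=k\<close> False by auto
    qed
  next
    case False3: False
    show ?thesis
    proof (cases "i = l")
      case True then show ?thesis using assms False False3 by auto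
    next
      case False4: False then show ?thesis using assms False False3 by auto
    qed
  qed
qed

lemma lin_aux: "(b::complex) = 1/4 * (2*b + 4*a + 2*c) \<Longrightarrow> b = 2*a + c"
proof -
  assume h: "b = 1/4 * (2*b + 4*a + 2*c)"
  have "b - (2*a + c) = 2 * (b - 1/4 * (2*b + 4*a + 2*c))" by (simp add: algebra_simps)
  also have "\<dots> = 0" using h by simp
  finally show ?thesis by simp
qed

definition phQ :: "'i set \<Rightarrow> 'i \<Rightarrow> 'i \<Rightarrow> 'i \<Rightarrow> complex" where
  "phQ I p = (\<lambda>x\<in>I. \<lambda>y\<in>I. if x = y then (if x = p then \<i> else 1) else 0)"

locale momsetup = prob_space M for M :: "'m measure" +
  fixes I :: "'i set" and X :: "'m \<Rightarrow> 'i \<Rightarrow> complex"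
  assumes finI: "finite I" and cardI: "card I \<ge> 2"
  and measX: "\<And>i. i \<in> I \<Longrightarrow> (\<lambda>\<omega>. X \<omega> i) \<in> borel_measurable M"
  and unitX: "AE \<omega> in M. (\<Sum>i\<in>I. (cmod (X \<omega> i))\<^sup>2) = 1"
  and invO: "\<And>Q i j k l. Q \<in> orthogonal_group I \<Longrightarrow> i\<in>I \<Longrightarrow> j\<in>I \<Longrightarrow> k\<in>I \<Longrightarrow> l\<in>I \<Longrightarrow>
      (\<integral>\<omega>. mono (matvec I (cmat I Q) (X \<omega>)) i j k l \<partial>M) = (\<integral>\<omega>. mono (X \<omega>) i j k l \<partial>M)"
begin

definition E where "E i j k l = (\<integral>\<omega>. mono (X \<omega>) i j k l \<partial>M)"

lemma bddX: "AE \<omega> in M. \<forall>i\<in>I. cmod (X \<omega> i) \<le> 1"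
  using unitX
proof eventually_elim
  case (elim \<omega>)
  show ?case
  proof
    fix i assume i: "i \<in> I"
    have "(cmod (X \<omega> i))\<^sup>2 \<le> (\<Sum>i\<in>I. (cmod (X \<omega> i))\<^sup>2)"
      by (rule member_le_sum) (use i finI in auto)
    then have "(cmod (X \<omega> i))\<^sup>2 \<le> 1\<^sup>2" using elim by simp
    then show "cmod (X \<omega> i) \<le> 1" by (rule power2_le_imp_le) simp
  qed
qed

lemma int_mono: "i\<in>I \<Longrightarrow> j\<in>I \<Longrightarrow> k\<in>I \<Longrightarrow> l\<in>I \<Longrightarrow> integrable M (\<lambda>\<omega>. mono (X \<omega>) i j k l)"
  apply (rule integrable_const_bound[where B=1])
  using bddX
   apply eventually_elim
   apply (simp add: mono_def norm_mult)
   apply (metis mult_le_one norm_ge_zero)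
  unfolding mono_def
  using measX by measurable

definition sgnQ :: "'i \<Rightarrow> 'i \<Rightarrow> 'i \<Rightarrow> real" where
  "sgnQ p = (\<lambda>x\<in>I. \<lambda>y\<in>I. if x = y then (if x = p then -1 else 1) else 0)"

lemma sgnQ_orth: "sgnQ p \<in> orthogonal_group I"
  unfolding orthogonal_group_def mats_def sgnQ_def
  by (auto simp: if_distrib[of "\<lambda>x. x * _"] sum.delta finI cong: if_cong)

lemma sgnQ_vec: "i \<in> I \<Longrightarrow> matvec I (cmat I (sgnQ p)) w i = (if i = p then - w i else w i)"
  unfolding matvec_def cmat_def sgnQ_def
  by (auto simp: if_distrib[of "\<lambda>x. x * _"] if_distrib[of complex_of_real] sum.delta finI cong: if_cong)

definition sg :: "'i \<Rightarrow> 'i \<Rightarrow> complex" where "sg p x = (if x = p then -1 else 1)"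

lemma E_flip:
  assumes "p \<in> I" "i\<in>I" "j\<in>I" "k\<in>I" "l\<in>I"
  shows "E i j k l = sg p i * sg p j * sg p k * sg p l * E i j k l"
proof -
  have "E i j k l = (\<integral>\<omega>. mono (matvec I (cmat I (sgnQ p)) (X \<omega>)) i j k l \<partial>M)"
    unfolding E_def using invO[OF sgnQ_orth assms(2-5)] by simp
  also have "\<dots> = (\<integral>\<omega>. (sg p i * sg p j * sg p k * sg p l) * mono (X \<omega>) i j k l \<partial>M)"
    by (rule Bochner_Integration.integral_cong) (auto simp: mono_def sgnQ_vec assms sg_def)
  also have "\<dots> = sg p i * sg p j * sg p k * sg p l * E i j k l"
    unfolding E_def by simp
  finally show ?thesis .
qed

lemma E_zero:
  assumes "p \<in> I" "i\<in>I" "j\<in>I" "k\<in>I" "l\<in>I" "sg p i * sg p j * sg p k * sg p l = -1"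
  shows "E i j k l = 0"
  using E_flip[OF assms(1-5)] assms(6) by simp

lemma sw_in: "p \<in> I \<Longrightarrow> q \<in> I \<Longrightarrow> x \<in> I \<Longrightarrow> sw p q x \<in> I"
  by (simp add: sw_def)

lemma sw_eq: "(i = sw p q k) = (k = sw p q i)"
  by (auto simp: sw_def)

definition permQ :: "'i \<Rightarrow> 'i \<Rightarrow> 'i \<Rightarrow> 'i \<Rightarrow> real" where
  "permQ p q = (\<lambda>x\<in>I. \<lambda>y\<in>I. if y = sw p q x then 1 else 0)"

lemma permQ_orth: "p \<in> I \<Longrightarrow> q \<in> I \<Longrightarrow> permQ p q \<in> orthogonal_group I"
proof -
  have e: "\<And>i j k. (if i = sw p q k then 1 else 0) * (if j = sw p q k then 1 else 0) =
     (if k = sw p q i then (if i = j then 1 else 0) else (0::real))" by (auto simp: sw_def)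
  assume "p \<in> I" "q \<in> I"
  then show ?thesis
  unfolding orthogonal_group_def mats_def permQ_def
  by (auto simp: e sum.delta finI sw_in cong: if_cong)
qed

lemma permQ_vec: "p \<in> I \<Longrightarrow> q \<in> I \<Longrightarrow> i \<in> I \<Longrightarrow> matvec I (cmat I (permQ p q)) w i = w (sw p q i)"
  unfolding matvec_def cmat_def permQ_def
  by (auto simp: if_distrib[of "\<lambda>x. x * _"] if_distrib[of complex_of_real] sum.delta' finI sw_in cong: if_cong)

lemma E_perm:
  assumes "p \<in> I" "q \<in> I" "i\<in>I" "j\<in>I" "k\<in>I" "l\<in>I"
  shows "E (sw p q i) (sw p q j) (sw p q k) (sw p q l) = E i j k l"
proof -
  have "E i j k l = (\<integral>\<omega>. mono (matvec I (cmat I (permQ p q)) (X \<omega>)) i j k l \<partial>M)"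
    unfolding E_def using invO[OF permQ_orth[OF assms(1,2)] assms(3-6)] by simp
  also have "\<dots> = E (sw p q i) (sw p q j) (sw p q k) (sw p q l)"
    unfolding E_def
    by (rule Bochner_Integration.integral_cong) (auto simp: mono_def permQ_vec assms)
  finally show ?thesis by simp
qed

definition p0 where "p0 = (SOME p. p \<in> I)"
definition q0 where "q0 = (SOME q. q \<in> I \<and> q \<noteq> p0)"

lemma p0: "p0 \<in> I"
proof -
  have "I \<noteq> {}" using cardI by auto
  then show ?thesis unfolding p0_def by (simp add: some_in_eq)
qed

lemma q0: "q0 \<in> I" "q0 \<noteq> p0"
proof -
  have "card (I - {p0}) \<ge> 1" using cardI p0 finI by (simp add: card_Diff_singleton)
  then have "\<exists>q. q \<in> I \<and> q \<noteq> p0" by (metis Diff_iff card.empty ex_in_conv insertI1 not_one_le_zero)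
  then have "q0 \<in> I \<and> q0 \<noteq> p0" unfolding q0_def by (rule someI_ex)
  then show "q0 \<in> I" "q0 \<noteq> p0" by auto
qed

definition bb where "bb = E p0 p0 p0 p0"
definition aa where "aa = E p0 p0 q0 q0"
definition cc where "cc = E p0 q0 p0 q0"

lemma b_const: "p \<in> I \<Longrightarrow> E p p p p = bb"
  using E_perm[of p p0 p p p p] p0 unfolding bb_def by (simp add: sw_def)

lemma a_const: assumes "p \<in> I" "q \<in> I" "p \<noteq> q" shows "E p p q q = aa"
proof -
  define q1 where "q1 = sw p p0 q"
  have q1: "q1 \<in> I" "q1 \<noteq> p0" using assms p0 unfolding q1_def sw_def by auto
  have "E p p q q = E p0 p0 q1 q1"
    using E_perm[of p p0 p p q q] assms p0 unfolding q1_def by (simp add: sw_def)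
  also have "\<dots> = E p0 p0 q0 q0"
    using E_perm[of q1 q0 p0 p0 q1 q1] q1 q0 p0 by (simp add: sw_def)
  finally show ?thesis unfolding aa_def .
qed

lemma c_const: assumes "p \<in> I" "q \<in> I" "p \<noteq> q" shows "E p q p q = cc"
proof -
  define q1 where "q1 = sw p p0 q"
  have q1: "q1 \<in> I" "q1 \<noteq> p0" using assms p0 unfolding q1_def sw_def by auto
  have "E p q p q = E p0 q1 p0 q1"
    using E_perm[of p p0 p q p q] assms p0 unfolding q1_def by (simp add: sw_def)
  also have "\<dots> = E p0 q0 p0 q0"
    using E_perm[of q1 q0 p0 q1 p0 q1] q1 q0 p0 by (simp add: sw_def)
  finally show ?thesis unfolding cc_def .
qed

lemma E_formula:
  assumes "i\<in>I" "j\<in>I" "k\<in>I" "l\<in>I"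
  shows "E i j k l = (if i=j \<and> j=k \<and> k=l then bb else if i=j \<and> k=l then aa
     else if i=l \<and> j=k then aa else if i=k \<and> j=l then cc else 0)"
proof -
  have m: "\<And>w. mono w i j j i = mono w i i j j" by (simp add: mono_def ac_simps)
  consider "i=j \<and> j=k \<and> k=l" | "\<not>(i=j \<and> j=k \<and> k=l)" "i=j \<and> k=l"
    | "\<not>(i=j \<and> j=k \<and> k=l)" "\<not>(i=j \<and> k=l)" "i=l \<and> j=k"
    | "\<not>(i=j \<and> j=k \<and> k=l)" "\<not>(i=j \<and> k=l)" "\<not>(i=l \<and> j=k)" "i=k \<and> j=l"
    | "\<not>(i=j \<and> j=k \<and> k=l)" "\<not>(i=j \<and> k=l)" "\<not>(i=l \<and> j=k)" "\<not>(i=k \<and> j=l)"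
    by blast
  then show ?thesis
  proof cases
    case 1 then show ?thesis using b_const assms by auto
  next
    case 2 then show ?thesis using a_const assms by auto
  next
    case 3
    then have "E i j k l = E i i j j" using m unfolding E_def by auto
    then show ?thesis using 3 a_const assms by auto
  next
    case 4 then show ?thesis using c_const assms by auto
  next
    case 5
    have "sg i i * sg i j * sg i k * sg i l = -1 \<or> sg j i * sg j j * sg j k * sg j l = -1
        \<or> sg k i * sg k j * sg k k * sg k l = -1"
      using odd_witness[OF 5] unfolding sg_def .
    then have "E i j k l = 0"
    proof (elim disjE)
      assume "sg i i * sg i j * sg i k * sg i l = -1" then show ?thesis by (intro E_zero[of i i j k l] assms)
    next
      assume "sg j i * sg j j * sg j k * sg j l = -1" then show ?thesis by (intro E_zero[of j i j k l] assms)
    next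
      assume "sg k i * sg k j * sg k k * sg k l = -1" then show ?thesis by (intro E_zero[of k i j k l] assms)
    qed
    then show ?thesis using 5 by (simp only: if_False if_P if_not_P)
  qed
qed

definition rr :: real where "rr = sqrt (1/2)"
lemma rr2: "rr * rr = 1/2" unfolding rr_def by (simp add: real_sqrt_mult[symmetric])

definition rotQ :: "'i \<Rightarrow> 'i \<Rightarrow> 'i \<Rightarrow> 'i \<Rightarrow> real" where
  "rotQ p q = (\<lambda>x\<in>I. \<lambda>y\<in>I. if x \<in> {p,q} \<and> y \<in> {p,q} then (if x = q \<and> y = q then -rr else rr)
     else if x = y then 1 else 0)"

lemma split_pq:
  assumes "p \<in> I" "q \<in> I" "p \<noteq> q"
  shows "(\<Sum>k\<in>I. f k) = f p + f q + (\<Sum>k\<in>I-{p,q}. f k)"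
proof -
  have "(\<Sum>k\<in>I. f k) = (\<Sum>k\<in>{p,q}. f k) + (\<Sum>k\<in>I-{p,q}. f k)"
    using assms finI by (subst sum.subset_diff[of "{p,q}"]) (auto simp: ac_simps)
  then show ?thesis using assms by (simp add: ac_simps)
qed

lemma rotQ_orth:
  assumes "p \<in> I" "q \<in> I" "p \<noteq> q"
  shows "rotQ p q \<in> orthogonal_group I"
  unfolding orthogonal_group_def mats_def
proof (intro CollectI conjI ballI)
  show "rotQ p q \<in> (I \<rightarrow>\<^sub>E I \<rightarrow>\<^sub>E UNIV)" unfolding rotQ_def by auto
  fix i j assume ij: "i \<in> I" "j \<in> I"
  have rest: "(\<Sum>k\<in>I-{p,q}. rotQ p q k i * rotQ p q k j) = (\<Sum>k\<in>I-{p,q}. if k = i then (if i = j then 1 else 0) else 0)"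
    by (rule sum.cong) (auto simp: rotQ_def ij)
  have "(\<Sum>k\<in>I. rotQ p q k i * rotQ p q k j) = rotQ p q p i * rotQ p q p j + rotQ p q q i * rotQ p q q j
     + (\<Sum>k\<in>I-{p,q}. if k = i then (if i = j then 1 else 0) else 0)"
    by (subst split_pq[OF assms]) (simp only: rest)
  also have "\<dots> = (if i = j then 1 else 0)"
    using assms ij finI rr2 by (auto simp: rotQ_def sum.delta')
  finally show "(\<Sum>k\<in>I. rotQ p q k i * rotQ p q k j) = (if i = j then 1 else 0)" .
qed

lemma rotQ_vec:
  assumes "p \<in> I" "q \<in> I" "p \<noteq> q"
  shows "matvec I (cmat I (rotQ p q)) w p = complex_of_real rr * (w p + w q)"
proof -
  have rest: "(\<Sum>k\<in>I-{p,q}. cmat I (rotQ p q) p k * w k) = 0"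
    by (rule sum.neutral) (auto simp: rotQ_def cmat_def assms)
  show ?thesis unfolding matvec_def using assms split_pq[OF assms, of "\<lambda>k. cmat I (rotQ p q) p k * w k"] rest
    by (simp add: rotQ_def cmat_def algebra_simps)
qed

lemma rot_rel: "bb = 2 * aa + cc"
proof -
  note pq = p0 q0(1) q0(2)[symmetric]
  let ?S = "{p0, q0}"
  have pw: "mono (matvec I (cmat I (rotQ p0 q0)) (X \<omega>)) p0 p0 p0 p0 =
     (1/4) * (\<Sum>i\<in>?S. \<Sum>j\<in>?S. \<Sum>k\<in>?S. \<Sum>l\<in>?S. mono (X \<omega>) i j k l)" for \<omega>
  proof -
    have c: "complex_of_real rr * complex_of_real rr = 1/2" using rr2
      by (metis of_real_divide of_real_mult of_real_1 of_real_numeral)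
    have "mono (matvec I (cmat I (rotQ p0 q0)) (X \<omega>)) p0 p0 p0 p0 =
      (complex_of_real rr * complex_of_real rr) * (complex_of_real rr * complex_of_real rr) *
      ((X \<omega> p0 + X \<omega> q0) * cnj (X \<omega> p0 + X \<omega> q0) * (X \<omega> p0 + X \<omega> q0) * cnj (X \<omega> p0 + X \<omega> q0))"
      by (simp add: rotQ_vec[OF pq] mono_def)
    also have "\<dots> = (1/4) * ((X \<omega> p0 + X \<omega> q0) * cnj (X \<omega> p0 + X \<omega> q0) * (X \<omega> p0 + X \<omega> q0) * cnj (X \<omega> p0 + X \<omega> q0))"
      by (simp add: c)
    also have "\<dots> = (1/4) * (\<Sum>i\<in>?S. \<Sum>j\<in>?S. \<Sum>k\<in>?S. \<Sum>l\<in>?S. mono (X \<omega>) i j k l)"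
      using q0(2) by (simp add: mono_def algebra_simps)
    finally show ?thesis .
  qed
  have "bb = (\<integral>\<omega>. mono (matvec I (cmat I (rotQ p0 q0)) (X \<omega>)) p0 p0 p0 p0 \<partial>M)"
    unfolding bb_def E_def using invO[OF rotQ_orth[OF pq] p0 p0 p0 p0] by simp
  also have "\<dots> = (1/4) * (\<Sum>i\<in>?S. \<Sum>j\<in>?S. \<Sum>k\<in>?S. \<Sum>l\<in>?S. E i j k l)"
    unfolding pw E_def using pq
    by (simp add: integral_sum int_mono integrable_sum)
  also have "\<dots> = (1/4) * (2 * bb + 4 * aa + 2 * cc)"
    using pq by (simp add: E_formula)
  finally have "bb = (1/4) * (2 * bb + 4 * aa + 2 * cc)" .
  then show ?thesis by (rule lin_aux)
qed

lemma sumsum_E: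
  assumes "\<And>i k. i \<in> I \<Longrightarrow> k \<in> I \<Longrightarrow> F i k = (if i = k then P else Q)"
  shows "(\<Sum>i\<in>I. \<Sum>k\<in>I. F i k) = of_nat (card I) * (P + of_nat (card I - 1) * (Q::complex))"
proof -
  have "(\<Sum>i\<in>I. \<Sum>k\<in>I. F i k) = (\<Sum>i\<in>I. P + of_nat (card I - 1) * Q)"
    by (rule sum.cong) (auto simp: assms sum_if_eq finI cong: sum.cong)
  then show ?thesis by simp
qed

lemma norm1: "let D = of_nat (card I) in D * bb + D * (D - 1) * aa = 1"
proof -
  have ci: "card I \<ge> 1" using cardI by simp
  have "(\<Sum>i\<in>I. \<Sum>k\<in>I. E i i k k) = (\<integral>\<omega>. (\<Sum>i\<in>I. \<Sum>k\<in>I. mono (X \<omega>) i i k k) \<partial>M)"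
    unfolding E_def by (simp add: integral_sum int_mono integrable_sum)
  also have "\<dots> = (\<integral>\<omega>. 1 \<partial>M)"
  proof (rule integral_cong_AE)
    show "(\<lambda>\<omega>. \<Sum>i\<in>I. \<Sum>k\<in>I. mono (X \<omega>) i i k k) \<in> borel_measurable M"
      unfolding mono_def using measX by measurable
    show "AE \<omega> in M. (\<Sum>i\<in>I. \<Sum>k\<in>I. mono (X \<omega>) i i k k) = 1"
      using unitX
    proof eventually_elim
      case (elim \<omega>)
      have "(\<Sum>i\<in>I. \<Sum>k\<in>I. mono (X \<omega>) i i k k) = (\<Sum>i\<in>I. X \<omega> i * cnj (X \<omega> i)) * (\<Sum>k\<in>I. X \<omega> k * cnj (X \<omega> k))"
        by (simp add: mono_def sum_product ac_simps)
      also have "(\<Sum>i\<in>I. X \<omega> i * cnj (X \<omega> i)) = of_real (\<Sum>i\<in>I. (cmod (X \<omega> i))\<^sup>2)"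
        unfolding of_real_sum by (intro sum.cong refl) (metis complex_norm_square)
      finally show ?case using elim by simp
    qed
  qed simp
  also have "\<dots> = 1" by (simp add: prob_space)
  finally have "(\<Sum>i\<in>I. \<Sum>k\<in>I. E i i k k) = 1" .
  moreover have "(\<Sum>i\<in>I. \<Sum>k\<in>I. E i i k k) = of_nat (card I) * (bb + of_nat (card I - 1) * aa)"
    by (rule sumsum_E) (simp add: E_formula)
  ultimately show ?thesis using ci by (simp add: Let_def of_nat_diff algebra_simps)
qed

lemma norm2: "let D = of_nat (card I) in D * bb + D * (D - 1) * cc =
   (\<integral>\<omega>. (\<Sum>i\<in>I. (X \<omega> i)\<^sup>2) * cnj (\<Sum>i\<in>I. (X \<omega> i)\<^sup>2) \<partial>M)"
proof -
  have ci: "card I \<ge> 1" using cardI by simp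
  have "(\<Sum>i\<in>I. \<Sum>k\<in>I. E i k i k) = (\<integral>\<omega>. (\<Sum>i\<in>I. \<Sum>k\<in>I. mono (X \<omega>) i k i k) \<partial>M)"
    unfolding E_def by (simp add: integral_sum int_mono integrable_sum)
  also have "\<dots> = (\<integral>\<omega>. (\<Sum>i\<in>I. (X \<omega> i)\<^sup>2) * cnj (\<Sum>i\<in>I. (X \<omega> i)\<^sup>2) \<partial>M)"
    by (rule Bochner_Integration.integral_cong) (simp_all add: mono_def sum_product power2_eq_square ac_simps)
  finally have "(\<Sum>i\<in>I. \<Sum>k\<in>I. E i k i k) = \<dots>" .
  moreover have "(\<Sum>i\<in>I. \<Sum>k\<in>I. E i k i k) = of_nat (card I) * (bb + of_nat (card I - 1) * cc)"
    by (rule sumsum_E) (simp add: E_formula)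
  ultimately show ?thesis using ci by (simp add: Let_def of_nat_diff algebra_simps)
qed

end

locale momsetupU = momsetup +
  assumes invPh: "\<And>p i j k l. p \<in> I \<Longrightarrow> i\<in>I \<Longrightarrow> j\<in>I \<Longrightarrow> k\<in>I \<Longrightarrow> l\<in>I \<Longrightarrow>
      (\<integral>\<omega>. mono (matvec I (phQ I p) (X \<omega>)) i j k l \<partial>M) = (\<integral>\<omega>. mono (X \<omega>) i j k l \<partial>M)"
begin

lemma phQ_vec: "i \<in> I \<Longrightarrow> matvec I (phQ I p) w i = (if i = p then \<i> * w i else w i)"
  unfolding matvec_def phQ_def
  by (auto simp: if_distrib[of "\<lambda>x. x * _"] sum.delta finI cong: if_cong)

lemma ii_aux: "\<i> * x * y * (\<i> * x) * y = - (x * y * x * (y::complex))"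
proof -
  have "\<i> * x * y * (\<i> * x) * y = (\<i> * \<i>) * (x * y * x * y)" by (simp only: ac_simps)
  then show ?thesis by simp
qed

lemma cc0: "cc = 0"
proof -
  note pq = p0 q0(1) q0(2)[symmetric]
  have "cc = (\<integral>\<omega>. mono (matvec I (phQ I p0) (X \<omega>)) p0 q0 p0 q0 \<partial>M)"
    unfolding cc_def E_def using invPh[OF p0 p0 q0(1) p0 q0(1)] by simp
  also have "\<dots> = (\<integral>\<omega>. - mono (X \<omega>) p0 q0 p0 q0 \<partial>M)"
    by (rule Bochner_Integration.integral_cong) (use pq in \<open>auto simp: mono_def phQ_vec ii_aux\<close>)
  also have "\<dots> = - cc" unfolding cc_def E_def by simp
  finally show ?thesis by simp
qed

lemma unit_vals: "aa = 1 / (of_nat (card I) * (of_nat (card I) + 1))" "bb = 2 * aa"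
proof -
  show b: "bb = 2 * aa" using rot_rel cc0 by simp
  let ?D = "of_nat (card I) :: complex"
  have "?D * bb + ?D * (?D - 1) * aa = 1" using norm1 by (simp add: Let_def)
  then have "aa * (?D * (?D + 1)) = 1" using b by (simp add: algebra_simps)
  moreover have "?D * (?D + 1) \<noteq> 0" using cardI
    by (metis add_eq_0_iff_both_eq_0 mult_eq_0_iff of_nat_1 of_nat_add of_nat_eq_0_iff one_neq_zero card.empty not_numeral_le_zero)
  ultimately show "aa = 1 / (?D * (?D + 1))" by (simp add: field_simps)
qed

end


lemma cmat_unitary:
  assumes "Q \<in> orthogonal_group I" shows "cmat I Q \<in> unitary_group I"
  unfolding unitary_group_def
proof (intro CollectI conjI ballI)
  show "cmat I Q \<in> mats I" unfolding mats_def cmat_def by auto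
  fix i j assume ij: "i \<in> I" "j \<in> I"
  have "(\<Sum>k\<in>I. cnj (cmat I Q k i) * cmat I Q k j) = complex_of_real (\<Sum>k\<in>I. Q k i * Q k j)"
    unfolding of_real_sum by (intro sum.cong refl) (simp add: cmat_def ij)
  also have "(\<Sum>k\<in>I. Q k i * Q k j) = (if i = j then 1 else 0)"
    using assms ij unfolding orthogonal_group_def by auto
  finally show "(\<Sum>k\<in>I. cnj (cmat I Q k i) * cmat I Q k j) = (if i = j then 1 else 0)" by simp
qed

lemma phQ_unitary: "finite I \<Longrightarrow> phQ I p \<in> unitary_group I"
  unfolding unitary_group_def mats_def phQ_def
  by (auto simp: if_distrib[of "\<lambda>x. x * _"] if_distrib[of cnj] sum.delta cong: if_cong)

lemma unitary_norm:
  assumes "V \<in> unitary_group I" "finite I"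
  shows "(\<Sum>i\<in>I. (cmod (matvec I V w i))\<^sup>2) = (\<Sum>i\<in>I. (cmod (w i))\<^sup>2)"
proof -
  have orth: "\<And>j k. j \<in> I \<Longrightarrow> k \<in> I \<Longrightarrow> (\<Sum>i\<in>I. V i j * cnj (V i k)) = (if j = k then 1 else 0)"
  proof -
    fix j k assume jk: "j \<in> I" "k \<in> I"
    have "(\<Sum>i\<in>I. cnj (V i k) * V i j) = (if k = j then 1 else 0)"
      using assms(1) jk unfolding unitary_group_def by auto
    then show "(\<Sum>i\<in>I. V i j * cnj (V i k)) = (if j = k then 1 else 0)"
      by (auto simp: ac_simps)
  qed
  have "complex_of_real (\<Sum>i\<in>I. (cmod (matvec I V w i))\<^sup>2) =
      (\<Sum>i\<in>I. (\<Sum>j\<in>I. V i j * w j) * cnj (\<Sum>k\<in>I. V i k * w k))"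
    unfolding of_real_sum by (intro sum.cong refl) (simp add: matvec_def complex_norm_square del: of_real_power)
  also have "\<dots> = (\<Sum>j\<in>I. \<Sum>k\<in>I. w j * cnj (w k) * (\<Sum>i\<in>I. V i j * cnj (V i k)))"
  proof -
    have "(\<Sum>i\<in>I. (\<Sum>j\<in>I. V i j * w j) * cnj (\<Sum>k\<in>I. V i k * w k)) =
      (\<Sum>i\<in>I. \<Sum>j\<in>I. \<Sum>k\<in>I. w j * cnj (w k) * (V i j * cnj (V i k)))"
      by (intro sum.cong refl) (simp add: sum_product ac_simps)
    also have "\<dots> = (\<Sum>j\<in>I. \<Sum>i\<in>I. \<Sum>k\<in>I. w j * cnj (w k) * (V i j * cnj (V i k)))"
      by (rule sum.swap)
    also have "\<dots> = (\<Sum>j\<in>I. \<Sum>k\<in>I. \<Sum>i\<in>I. w j * cnj (w k) * (V i j * cnj (V i k)))"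
      by (intro sum.cong refl sum.swap)
    also have "\<dots> = (\<Sum>j\<in>I. \<Sum>k\<in>I. w j * cnj (w k) * (\<Sum>i\<in>I. V i j * cnj (V i k)))"
      by (simp add: sum_distrib_left)
    finally show ?thesis .
  qed
  also have "\<dots> = (\<Sum>j\<in>I. w j * cnj (w j))"
  proof -
    have e: "\<And>j k. w j * cnj (w k) * (if j = k then 1 else 0) = (if j = k then w j * cnj (w j) else 0)" by auto
    show ?thesis using assms(2) by (simp add: orth e sum.delta cong: sum.cong)
  qed
  also have "\<dots> = complex_of_real (\<Sum>i\<in>I. (cmod (w i))\<^sup>2)"
    unfolding of_real_sum by (intro sum.cong refl) (metis complex_norm_square)
  finally show ?thesis by (simp only: of_real_eq_iff)
qed


lemma ent_meas:
  assumes "i \<in> I" "j \<in> I"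
  shows "(\<lambda>U. U i j) \<in> borel_measurable (mat_space I)"
  unfolding mat_space_def
  by (rule measurable_compose[OF measurable_component_singleton[OF assms(1)] measurable_component_singleton[OF assms(2)]])

lemma vcomp_meas:
  assumes "i \<in> I"
  shows "(\<lambda>z. z i) \<in> borel_measurable (vec_space I)"
  unfolding vec_space_def by (rule measurable_component_singleton[OF assms(1)])

lemma matmul_meas:
  fixes V :: "'i \<Rightarrow> 'i \<Rightarrow> 'a::{comm_semiring_1, real_normed_algebra, second_countable_topology}"
  shows "matmul I V \<in> measurable (mat_space I) (mat_space I)"
proof -
  have "(\<lambda>U. \<lambda>i\<in>I. \<lambda>j\<in>I. \<Sum>k\<in>I. V i k * U k j) \<in> measurable (mat_space I) (Pi\<^sub>M I (\<lambda>_. Pi\<^sub>M I (\<lambda>_. borel)))"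
  proof (intro measurable_restrict borel_measurable_sum borel_measurable_times borel_measurable_const)
    fix i j k assume "i \<in> I" "j \<in> I" "k \<in> I"
    then show "(\<lambda>U. U k j) \<in> borel_measurable (mat_space I)" by (intro ent_meas)
  qed
  then show ?thesis unfolding matmul_def by (simp add: mat_space_def[symmetric])
qed

lemma matvec_meas:
  fixes V :: "'i \<Rightarrow> 'i \<Rightarrow> 'a::{comm_semiring_1, real_normed_algebra, second_countable_topology}"
  shows "matvec I V \<in> measurable (vec_space I) (vec_space I)"
proof -
  have "(\<lambda>z. \<lambda>i\<in>I. \<Sum>k\<in>I. V i k * z k) \<in> measurable (vec_space I) (Pi\<^sub>M I (\<lambda>_. borel))"
  proof (intro measurable_restrict borel_measurable_sum borel_measurable_times borel_measurable_const)
    fix k assume "k \<in> I"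
    then show "(\<lambda>z. z k) \<in> borel_measurable (vec_space I)" by (rule vcomp_meas)
  qed
  then show ?thesis unfolding matvec_def by (simp add: vec_space_def[symmetric])
qed


lemma matvec_matmul:
  fixes V U :: "'i \<Rightarrow> 'i \<Rightarrow> 'a::comm_semiring_1"
  assumes "i \<in> I"
  shows "matvec I (matmul I V U) w i = matvec I V (matvec I U w) i"
proof -
  have "matvec I (matmul I V U) w i = (\<Sum>j\<in>I. \<Sum>k\<in>I. V i k * U k j * w j)"
    using assms by (simp add: matvec_def matmul_def sum_distrib_right cong: sum.cong)
  also have "\<dots> = (\<Sum>k\<in>I. \<Sum>j\<in>I. V i k * U k j * w j)" by (rule sum.swap)
  also have "\<dots> = matvec I V (matvec I U w) i"
    using assms by (simp add: matvec_def sum_distrib_left mult.assoc cong: sum.cong)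
  finally show ?thesis .
qed

lemma matvec_cmat: "matvec I (\<lambda>x y. complex_of_real (Q x y)) = matvec I (cmat I Q)"
  unfolding matvec_def cmat_def by (intro ext) (simp cong: sum.cong)

lemma cmat_matmul: "i \<in> I \<Longrightarrow> j \<in> I \<Longrightarrow> cmat I (matmul I V Q) i j = matmul I (cmat I V) (cmat I Q) i j"
  unfolding cmat_def matmul_def by (simp cong: sum.cong)

lemma matvec_cong: "(\<And>i j. i \<in> I \<Longrightarrow> j \<in> I \<Longrightarrow> V i j = V' i j) \<Longrightarrow> matvec I V w = matvec I V' w"
  unfolding matvec_def by (intro ext) (simp cong: sum.cong)

lemma haarU_int:
  fixes f :: "_ \<Rightarrow> complex"
  assumes "haar_unitary I \<mu>" "V \<in> unitary_group I" "f \<in> borel_measurable (mat_space I)"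
  shows "(\<integral>U. f (matmul I V U) \<partial>\<mu>) = integral\<^sup>L \<mu> f"
proof -
  from assms(1,2) have eq: "distr \<mu> (mat_space I) (matmul I V) = \<mu>" and sets: "sets \<mu> = sets (mat_space I)"
    unfolding haar_unitary_def by auto
  have m: "matmul I V \<in> measurable \<mu> (mat_space I)"
    using matmul_meas measurable_cong_sets[OF sets refl] by blast
  have "integral\<^sup>L \<mu> f = integral\<^sup>L (distr \<mu> (mat_space I) (matmul I V)) f" by (simp add: eq)
  also have "\<dots> = (\<integral>U. f (matmul I V U) \<partial>\<mu>)" by (rule integral_distr[OF m assms(3)])
  finally show ?thesis by simp
qed

lemma haarO_int:
  fixes f :: "_ \<Rightarrow> complex"
  assumes "haar_orthogonal I \<mu>" "V \<in> orthogonal_group I" "f \<in> borel_measurable (mat_space I)"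
  shows "(\<integral>U. f (matmul I V U) \<partial>\<mu>) = integral\<^sup>L \<mu> f"
proof -
  from assms(1,2) have eq: "distr \<mu> (mat_space I) (matmul I V) = \<mu>" and sets: "sets \<mu> = sets (mat_space I)"
    unfolding haar_orthogonal_def by auto
  have m: "matmul I V \<in> measurable \<mu> (mat_space I)"
    using matmul_meas measurable_cong_sets[OF sets refl] by blast
  have "integral\<^sup>L \<mu> f = integral\<^sup>L (distr \<mu> (mat_space I) (matmul I V)) f" by (simp add: eq)
  also have "\<dots> = (\<integral>U. f (matmul I V U) \<partial>\<mu>)" by (rule integral_distr[OF m assms(3)])
  finally show ?thesis by simp
qed

lemma sphere_int:
  fixes f :: "_ \<Rightarrow> complex"
  assumes "uniform_sphere I \<sigma>" "V \<in> unitary_group I" "f \<in> borel_measurable (vec_space I)"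
  shows "(\<integral>z. f (matvec I V z) \<partial>\<sigma>) = integral\<^sup>L \<sigma> f"
proof -
  from assms(1,2) have eq: "distr \<sigma> (vec_space I) (matvec I V) = \<sigma>" and sets: "sets \<sigma> = sets (vec_space I)"
    unfolding uniform_sphere_def by auto
  have m: "matvec I V \<in> measurable \<sigma> (vec_space I)"
    using matvec_meas measurable_cong_sets[OF sets refl] by blast
  have "integral\<^sup>L \<sigma> f = integral\<^sup>L (distr \<sigma> (vec_space I) (matvec I V)) f" by (simp add: eq)
  also have "\<dots> = (\<integral>z. f (matvec I V z) \<partial>\<sigma>)" by (rule integral_distr[OF m assms(3)])
  finally show ?thesis by simp
qed

lemma AE_set1:
  assumes "prob_space M" "emeasure M S = 1"
  shows "AE x in M. x \<in> S"
proof -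
  interpret prob_space M by fact
  have "S \<in> sets M" using assms(2) emeasure_notin_sets by fastforce
  then show ?thesis using assms(2) AE_in_set_eq_1 by (simp add: emeasure_eq_measure)
qed


lemma mv_meas:
  assumes "i \<in> I"
  shows "(\<lambda>U. matvec I U w i) \<in> borel_measurable (mat_space I :: ('i \<Rightarrow> 'i \<Rightarrow> complex) measure)"
proof -
  have "(\<lambda>U. \<Sum>j\<in>I. U i j * w j) \<in> borel_measurable (mat_space I :: ('i \<Rightarrow> 'i \<Rightarrow> complex) measure)"
    by (intro borel_measurable_sum borel_measurable_times borel_measurable_const ent_meas assms)
  then show ?thesis using assms by (simp add: matvec_def)
qed

lemma mvr_meas:
  assumes "i \<in> I"
  shows "(\<lambda>Q. matvec I (cmat I Q) w i) \<in> borel_measurable (mat_space I :: ('i \<Rightarrow> 'i \<Rightarrow> real) measure)"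
proof -
  have "(\<lambda>Q. \<Sum>j\<in>I. complex_of_real (Q i j) * w j) \<in> borel_measurable (mat_space I :: ('i \<Rightarrow> 'i \<Rightarrow> real) measure)"
  proof (intro borel_measurable_sum borel_measurable_times borel_measurable_const)
    fix j assume "j \<in> I"
    show "(\<lambda>x. complex_of_real (x i j)) \<in> borel_measurable (mat_space I)"
      by (rule measurable_compose[OF ent_meas[OF assms \<open>j \<in> I\<close>]]) simp
  qed
  then show ?thesis using assms by (simp add: matvec_def cmat_def cong: sum.cong)
qed

lemma mono_meas:
  assumes "\<And>i. i \<in> I \<Longrightarrow> (\<lambda>x. X x i) \<in> borel_measurable M" "i \<in> I" "j \<in> I" "k \<in> I" "l \<in> I"
  shows "(\<lambda>x. mono (X x) i j k l) \<in> borel_measurable M"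
  unfolding mono_def using assms by measurable

lemma mono_cong: "i \<in> I \<Longrightarrow> j \<in> I \<Longrightarrow> k \<in> I \<Longrightarrow> l \<in> I \<Longrightarrow> (\<And>x. x \<in> I \<Longrightarrow> w x = w' x) \<Longrightarrow>
   mono w i j k l = mono w' i j k l"
  by (simp add: mono_def)

lemma momU:
  assumes haar: "haar_unitary I \<mu>" and fin: "finite I" and card: "card I \<ge> 2"
    and unit: "(\<Sum>i\<in>I. (cmod (\<phi> i))\<^sup>2) = 1"
  shows "momsetupU \<mu> I (\<lambda>U. matvec I U \<phi>)"
proof -
  have ps: "prob_space \<mu>" and sets: "sets \<mu> = sets (mat_space I)" and em: "emeasure \<mu> (unitary_group I) = 1"
    using haar unfolding haar_unitary_def by auto
  have mv: "(\<lambda>U. matvec I U \<phi> i) \<in> borel_measurable \<mu>" if "i \<in> I" for i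
    using mv_meas[OF that] measurable_cong_sets[OF sets refl] by blast
  have inv: "(\<integral>U. mono (matvec I V (matvec I U \<phi>)) i j k l \<partial>\<mu>) = (\<integral>U. mono (matvec I U \<phi>) i j k l \<partial>\<mu>)"
    if V: "V \<in> unitary_group I" and ijkl: "i \<in> I" "j \<in> I" "k \<in> I" "l \<in> I" for V i j k l
  proof -
    have "(\<integral>U. mono (matvec I V (matvec I U \<phi>)) i j k l \<partial>\<mu>) = (\<integral>U. mono (matvec I (matmul I V U) \<phi>) i j k l \<partial>\<mu>)"
      by (intro Bochner_Integration.integral_cong refl mono_cong[OF ijkl]) (simp add: matvec_matmul)
    also have "\<dots> = (\<integral>U. mono (matvec I U \<phi>) i j k l \<partial>\<mu>)"
      by (rule haarU_int[OF haar V, where f="\<lambda>U. mono (matvec I U \<phi>) i j k l"])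
         (rule mono_meas[OF mv_meas ijkl])
    finally show ?thesis .
  qed
  have unitX: "AE U in \<mu>. (\<Sum>i\<in>I. (cmod (matvec I U \<phi> i))\<^sup>2) = 1"
    using AE_set1[OF ps em] by eventually_elim (simp add: unitary_norm fin unit)
  show ?thesis
    unfolding momsetupU_def momsetupU_axioms_def momsetup_def momsetup_axioms_def
  proof (intro conjI allI impI ps)
    show "finite I" "2 \<le> card I" by fact+
  next
    fix i assume "i \<in> I" then show "(\<lambda>U. matvec I U \<phi> i) \<in> borel_measurable \<mu>" by (rule mv)
  next
    show "AE U in \<mu>. (\<Sum>i\<in>I. (cmod (matvec I U \<phi> i))\<^sup>2) = 1" by (rule unitX)
  next
    fix Q i j k l assume "Q \<in> orthogonal_group I" "i \<in> I" "j \<in> I" "k \<in> I" "l \<in> I"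
    then show "(\<integral>U. mono (matvec I (cmat I Q) (matvec I U \<phi>)) i j k l \<partial>\<mu>) = (\<integral>U. mono (matvec I U \<phi>) i j k l \<partial>\<mu>)"
      by (intro inv cmat_unitary)
  next
    fix p i j k l assume "p \<in> I" "i \<in> I" "j \<in> I" "k \<in> I" "l \<in> I"
    then show "(\<integral>U. mono (matvec I (phQ I p) (matvec I U \<phi>)) i j k l \<partial>\<mu>) = (\<integral>U. mono (matvec I U \<phi>) i j k l \<partial>\<mu>)"
      by (intro inv phQ_unitary fin)
  qed
qed


lemma orth_sq:
  assumes "Q \<in> orthogonal_group I" "finite I"
  shows "(\<Sum>i\<in>I. (matvec I (cmat I Q) w i)\<^sup>2) = (\<Sum>i\<in>I. (w i)\<^sup>2)"
proof -
  have orth: "\<And>j k. j \<in> I \<Longrightarrow> k \<in> I \<Longrightarrow> (\<Sum>i\<in>I. cmat I Q i j * cmat I Q i k) = (if j = k then 1 else 0)"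
  proof -
    fix j k assume jk: "j \<in> I" "k \<in> I"
    have "(\<Sum>i\<in>I. Q i j * Q i k) = (if j = k then 1 else 0)"
      using assms(1) jk unfolding orthogonal_group_def by auto
    then have "complex_of_real (\<Sum>i\<in>I. Q i j * Q i k) = (if j = k then 1 else 0)" by simp
    then show "(\<Sum>i\<in>I. cmat I Q i j * cmat I Q i k) = (if j = k then 1 else 0)"
      unfolding of_real_sum using jk by (simp add: cmat_def cong: sum.cong)
  qed
  have "(\<Sum>i\<in>I. (matvec I (cmat I Q) w i)\<^sup>2) =
      (\<Sum>i\<in>I. (\<Sum>j\<in>I. cmat I Q i j * w j) * (\<Sum>k\<in>I. cmat I Q i k * w k))"
    by (intro sum.cong refl) (simp add: matvec_def power2_eq_square)
  also have "\<dots> = (\<Sum>j\<in>I. \<Sum>k\<in>I. w j * w k * (\<Sum>i\<in>I. cmat I Q i j * cmat I Q i k))"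
  proof -
    have "(\<Sum>i\<in>I. (\<Sum>j\<in>I. cmat I Q i j * w j) * (\<Sum>k\<in>I. cmat I Q i k * w k)) =
      (\<Sum>i\<in>I. \<Sum>j\<in>I. \<Sum>k\<in>I. w j * w k * (cmat I Q i j * cmat I Q i k))"
      by (intro sum.cong refl) (simp add: sum_product ac_simps)
    also have "\<dots> = (\<Sum>j\<in>I. \<Sum>i\<in>I. \<Sum>k\<in>I. w j * w k * (cmat I Q i j * cmat I Q i k))"
      by (rule sum.swap)
    also have "\<dots> = (\<Sum>j\<in>I. \<Sum>k\<in>I. \<Sum>i\<in>I. w j * w k * (cmat I Q i j * cmat I Q i k))"
      by (intro sum.cong refl sum.swap)
    also have "\<dots> = (\<Sum>j\<in>I. \<Sum>k\<in>I. w j * w k * (\<Sum>i\<in>I. cmat I Q i j * cmat I Q i k))"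
      by (simp add: sum_distrib_left)
    finally show ?thesis .
  qed
  also have "\<dots> = (\<Sum>j\<in>I. (w j)\<^sup>2)"
  proof -
    have e: "\<And>j k. w j * w k * (if j = k then 1 else 0) = (if j = k then (w j)\<^sup>2 else 0)"
      by (auto simp: power2_eq_square)
    show ?thesis using assms(2) by (simp add: orth e sum.delta cong: sum.cong)
  qed
  finally show ?thesis .
qed

lemma momO:
  assumes haar: "haar_orthogonal I \<mu>" and fin: "finite I" and card: "card I \<ge> 2"
    and unit: "(\<Sum>i\<in>I. (cmod (\<phi> i))\<^sup>2) = 1"
  shows "momsetup \<mu> I (\<lambda>Q. matvec I (cmat I Q) \<phi>)"
    and "AE Q in \<mu>. (\<Sum>i\<in>I. (matvec I (cmat I Q) \<phi> i)\<^sup>2) = (\<Sum>i\<in>I. (\<phi> i)\<^sup>2)"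
proof -
  have ps: "prob_space \<mu>" and sets: "sets \<mu> = sets (mat_space I)" and em: "emeasure \<mu> (orthogonal_group I) = 1"
    using haar unfolding haar_orthogonal_def by auto
  have mv: "(\<lambda>Q. matvec I (cmat I Q) \<phi> i) \<in> borel_measurable \<mu>" if "i \<in> I" for i
    using mvr_meas[OF that] measurable_cong_sets[OF sets refl] by blast
  have inv: "(\<integral>Q. mono (matvec I (cmat I V) (matvec I (cmat I Q) \<phi>)) i j k l \<partial>\<mu>) = (\<integral>Q. mono (matvec I (cmat I Q) \<phi>) i j k l \<partial>\<mu>)"
    if V: "V \<in> orthogonal_group I" and ijkl: "i \<in> I" "j \<in> I" "k \<in> I" "l \<in> I" for V i j k l
  proof -
    have pt: "matvec I (cmat I V) (matvec I (cmat I Q) \<phi>) x = matvec I (cmat I (matmul I V Q)) \<phi> x"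
      if "x \<in> I" for x Q
    proof -
      have "matvec I (cmat I (matmul I V Q)) \<phi> = matvec I (matmul I (cmat I V) (cmat I Q)) \<phi>"
        by (rule matvec_cong) (rule cmat_matmul)
      then show ?thesis using matvec_matmul[OF that, of "cmat I V" "cmat I Q" \<phi>] by simp
    qed
    have "(\<integral>Q. mono (matvec I (cmat I V) (matvec I (cmat I Q) \<phi>)) i j k l \<partial>\<mu>) = (\<integral>Q. mono (matvec I (cmat I (matmul I V Q)) \<phi>) i j k l \<partial>\<mu>)"
      by (intro Bochner_Integration.integral_cong refl mono_cong[OF ijkl]) (simp add: pt)
    also have "\<dots> = (\<integral>Q. mono (matvec I (cmat I Q) \<phi>) i j k l \<partial>\<mu>)"
      by (rule haarO_int[OF haar V, where f="\<lambda>Q. mono (matvec I (cmat I Q) \<phi>) i j k l"])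
         (rule mono_meas[OF mvr_meas ijkl])
    finally show ?thesis .
  qed
  have unitX: "AE Q in \<mu>. (\<Sum>i\<in>I. (cmod (matvec I (cmat I Q) \<phi> i))\<^sup>2) = 1"
    using AE_set1[OF ps em] by eventually_elim (simp add: unitary_norm cmat_unitary fin unit)
  show "AE Q in \<mu>. (\<Sum>i\<in>I. (matvec I (cmat I Q) \<phi> i)\<^sup>2) = (\<Sum>i\<in>I. (\<phi> i)\<^sup>2)"
    using AE_set1[OF ps em] by eventually_elim (simp add: orth_sq fin)
  show "momsetup \<mu> I (\<lambda>Q. matvec I (cmat I Q) \<phi>)"
    unfolding momsetup_def momsetup_axioms_def
  proof (intro conjI allI impI ps)
    show "finite I" "2 \<le> card I" by fact+
  next
    fix i assume "i \<in> I" then show "(\<lambda>Q. matvec I (cmat I Q) \<phi> i) \<in> borel_measurable \<mu>" by (rule mv)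
  next
    show "AE Q in \<mu>. (\<Sum>i\<in>I. (cmod (matvec I (cmat I Q) \<phi> i))\<^sup>2) = 1" by (rule unitX)
  next
    fix Q i j k l assume "Q \<in> orthogonal_group I" "i \<in> I" "j \<in> I" "k \<in> I" "l \<in> I"
    then show "(\<integral>U. mono (matvec I (cmat I Q) (matvec I (cmat I U) \<phi>)) i j k l \<partial>\<mu>) = (\<integral>U. mono (matvec I (cmat I U) \<phi>) i j k l \<partial>\<mu>)"
      by (intro inv)
  qed
qed

lemma momS:
  assumes sph: "uniform_sphere I \<sigma>" and fin: "finite I" and card: "card I \<ge> 2"
  shows "momsetupU \<sigma> I (\<lambda>z. z)"
proof -
  have ps: "prob_space \<sigma>" and sets: "sets \<sigma> = sets (vec_space I)" and em: "emeasure \<sigma> (unit_sphere_on I) = 1"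
    using sph unfolding uniform_sphere_def by auto
  have mv: "(\<lambda>z. z i) \<in> borel_measurable \<sigma>" if "i \<in> I" for i
    using vcomp_meas[OF that] measurable_cong_sets[OF sets refl] by blast
  have inv: "(\<integral>z. mono (matvec I V z) i j k l \<partial>\<sigma>) = (\<integral>z. mono z i j k l \<partial>\<sigma>)"
    if V: "V \<in> unitary_group I" and ijkl: "i \<in> I" "j \<in> I" "k \<in> I" "l \<in> I" for V i j k l
    by (rule sphere_int[OF sph V, where f="\<lambda>z. mono z i j k l"]) (rule mono_meas[OF vcomp_meas ijkl])
  have unitX: "AE z in \<sigma>. (\<Sum>i\<in>I. (cmod (z i))\<^sup>2) = 1"
    using AE_set1[OF ps em] by eventually_elim (simp add: unit_sphere_on_def)
  show ?thesis
    unfolding momsetupU_def momsetupU_axioms_def momsetup_def momsetup_axioms_def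
  proof (intro conjI allI impI ps)
    show "finite I" "2 \<le> card I" by fact+
  next
    fix i assume "i \<in> I" then show "(\<lambda>z. z i) \<in> borel_measurable \<sigma>" by (rule mv)
  next
    show "AE z in \<sigma>. (\<Sum>i\<in>I. (cmod (z i))\<^sup>2) = 1" by (rule unitX)
  next
    fix Q i j k l assume "Q \<in> orthogonal_group I" "i \<in> I" "j \<in> I" "k \<in> I" "l \<in> I"
    then show "(\<integral>z. mono (matvec I (cmat I Q) z) i j k l \<partial>\<sigma>) = (\<integral>z. mono z i j k l \<partial>\<sigma>)"
      by (intro inv cmat_unitary)
  next
    fix p i j k l assume "p \<in> I" "i \<in> I" "j \<in> I" "k \<in> I" "l \<in> I"
    then show "(\<integral>z. mono (matvec I (phQ I p) z) i j k l \<partial>\<sigma>) = (\<integral>z. mono z i j k l \<partial>\<sigma>)"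
      by (intro inv phQ_unitary fin)
  qed
qed


inductive sepf :: "'a measure \<Rightarrow> 'b measure \<Rightarrow> ('a \<Rightarrow> 'b \<Rightarrow> complex) \<Rightarrow> bool" for Ma Mb where
  sepf_base: "integrable Ma F \<Longrightarrow> integrable Mb G \<Longrightarrow> sepf Ma Mb (\<lambda>x y. F x * G y)"
| sepf_add: "sepf Ma Mb H1 \<Longrightarrow> sepf Ma Mb H2 \<Longrightarrow> sepf Ma Mb (\<lambda>x y. H1 x y + H2 x y)"
| sepf_zero: "sepf Ma Mb (\<lambda>x y. 0)"

lemma sep_int2: "sepf Ma Mb Hf \<Longrightarrow> integrable Mb (Hf x)"
  by (induction rule: sepf.induct) auto

lemma sep_int1: "sepf Ma Mb Hf \<Longrightarrow> integrable Ma (\<lambda>x. Hf x y)"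
  by (induction rule: sepf.induct) auto

lemma sep_ii1: "sepf Ma Mb Hf \<Longrightarrow> integrable Ma (\<lambda>x. \<integral>y. Hf x y \<partial>Mb)"
proof (induction rule: sepf.induct)
  case (sepf_add H1 H2)
  then show ?case by (simp add: sep_int2)
qed auto

lemma sep_ii2: "sepf Ma Mb Hf \<Longrightarrow> integrable Mb (\<lambda>y. \<integral>x. Hf x y \<partial>Ma)"
proof (induction rule: sepf.induct)
  case (sepf_add H1 H2)
  then show ?case by (simp add: sep_int1)
qed auto

lemma sep_swap: "sepf Ma Mb Hf \<Longrightarrow> (\<integral>x. (\<integral>y. Hf x y \<partial>Mb) \<partial>Ma) = (\<integral>y. (\<integral>x. Hf x y \<partial>Ma) \<partial>Mb)"
proof (induction rule: sepf.induct)
  case (sepf_add H1 H2)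
  then show ?case by (simp add: sep_int1 sep_int2 sep_ii1 sep_ii2)
qed auto

lemma sep_sum:
  assumes "finite S" "\<And>s. s \<in> S \<Longrightarrow> sepf Ma Mb (Hf s)"
  shows "sepf Ma Mb (\<lambda>x y. \<Sum>s\<in>S. Hf s x y)"
  using assms
proof (induction S rule: finite_induct)
  case empty
  then show ?case using sepf_zero by simp
next
  case (insert a F)
  then have "sepf Ma Mb (\<lambda>x y. Hf a x y + (\<Sum>s\<in>F. Hf s x y))"
    by (intro sepf_add) auto
  then show ?case using insert by simp
qed

lemma prod4:
  fixes a b c e :: "'i \<Rightarrow> complex"
  shows "(\<Sum>p\<in>I. a p) * (\<Sum>q\<in>I. b q) * (\<Sum>r\<in>I. c r) * (\<Sum>s\<in>I. e s) =
    (\<Sum>p\<in>I. \<Sum>q\<in>I. \<Sum>r\<in>I. \<Sum>s\<in>I. a p * b q * c r * e s)"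
proof -
  have "(\<Sum>p\<in>I. \<Sum>q\<in>I. \<Sum>r\<in>I. \<Sum>s\<in>I. a p * b q * c r * e s) =
      (\<Sum>p\<in>I. \<Sum>q\<in>I. \<Sum>r\<in>I. (a p * b q * c r) * (\<Sum>s\<in>I. e s))"
    by (simp add: sum_distrib_left)
  also have "\<dots> = (\<Sum>p\<in>I. \<Sum>q\<in>I. (a p * b q) * (\<Sum>r\<in>I. c r) * (\<Sum>s\<in>I. e s))"
    by (simp only: sum_distrib_left[symmetric] sum_distrib_right[symmetric])
  also have "\<dots> = (\<Sum>p\<in>I. a p * (\<Sum>q\<in>I. b q) * (\<Sum>r\<in>I. c r) * (\<Sum>s\<in>I. e s))"
    by (simp only: sum_distrib_left[symmetric] sum_distrib_right[symmetric])
  also have "\<dots> = (\<Sum>p\<in>I. a p) * (\<Sum>q\<in>I. b q) * (\<Sum>r\<in>I. c r) * (\<Sum>s\<in>I. e s)"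
    by (simp only: sum_distrib_left[symmetric] sum_distrib_right[symmetric])
  finally show ?thesis by simp
qed

lemma mono_expand:
  assumes "i \<in> I" "j \<in> I" "k \<in> I" "l \<in> I"
  shows "mono (matvec I W v) i j k l = (\<Sum>p\<in>I. \<Sum>q\<in>I. \<Sum>r\<in>I. \<Sum>s\<in>I.
     (W i p * cnj (W j q) * W k r * cnj (W l s)) * (v p * cnj (v q) * v r * cnj (v s)))"
proof -
  have "mono (matvec I W v) i j k l = (\<Sum>p\<in>I. W i p * v p) * (\<Sum>q\<in>I. cnj (W j q) * cnj (v q)) *
      (\<Sum>r\<in>I. W k r * v r) * (\<Sum>s\<in>I. cnj (W l s) * cnj (v s))"
    using assms by (simp add: mono_def matvec_def)
  also have "\<dots> = (\<Sum>p\<in>I. \<Sum>q\<in>I. \<Sum>r\<in>I. \<Sum>s\<in>I.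
      (W i p * v p) * (cnj (W j q) * cnj (v q)) * (W k r * v r) * (cnj (W l s) * cnj (v s)))"
    by (rule prod4)
  also have "\<dots> = (\<Sum>p\<in>I. \<Sum>q\<in>I. \<Sum>r\<in>I. \<Sum>s\<in>I.
     (W i p * cnj (W j q) * W k r * cnj (W l s)) * (v p * cnj (v q) * v r * cnj (v s)))"
    by (simp add: ac_simps)
  finally show ?thesis .
qed

lemma sep_mono:
  fixes W :: "'a \<Rightarrow> 'i \<Rightarrow> 'i \<Rightarrow> complex" and v :: "'b \<Rightarrow> 'i \<Rightarrow> complex"
  assumes "finite I" "i \<in> I" "j \<in> I" "k \<in> I" "l \<in> I"
    and iW: "\<And>p q r s. p \<in> I \<Longrightarrow> q \<in> I \<Longrightarrow> r \<in> I \<Longrightarrow> s \<in> I \<Longrightarrow>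
       integrable Ma (\<lambda>x. W x i p * cnj (W x j q) * W x k r * cnj (W x l s))"
    and iv: "\<And>p q r s. p \<in> I \<Longrightarrow> q \<in> I \<Longrightarrow> r \<in> I \<Longrightarrow> s \<in> I \<Longrightarrow>
       integrable Mb (\<lambda>y. v y p * cnj (v y q) * v y r * cnj (v y s))"
  shows "sepf Ma Mb (\<lambda>x y. mono (matvec I (W x) (v y)) i j k l)"
proof -
  have "sepf Ma Mb (\<lambda>x y. \<Sum>p\<in>I. \<Sum>q\<in>I. \<Sum>r\<in>I. \<Sum>s\<in>I.
     (W x i p * cnj (W x j q) * W x k r * cnj (W x l s)) * (v y p * cnj (v y q) * v y r * cnj (v y s)))"
    by (intro sep_sum assms(1) sepf_base[where F="\<lambda>x. _ x", where G="\<lambda>y. _ y"] iW iv)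
  then show ?thesis by (simp add: mono_expand[OF assms(2-5)])
qed


definition Sfun :: "nat \<Rightarrow> (nat \<Rightarrow> nat) \<Rightarrow> nat set \<Rightarrow> ((nat \<Rightarrow> nat) \<Rightarrow> complex) \<Rightarrow> complex" where
  "Sfun N d A w = (\<Sum>a\<in>sub_idx d A. \<Sum>a'\<in>sub_idx d A. \<Sum>b\<in>sub_idx d ({..<N} - A). \<Sum>b'\<in>sub_idx d ({..<N} - A).
     mono w (merge_idx A a b) (merge_idx A a' b) (merge_idx A a' b') (merge_idx A a b'))"

lemma purity_expand: "purity N d A w = Re (Sfun N d A w)"
  unfolding purity_def Sfun_def rdm_def
  by (simp add: sum_product mono_def ac_simps)

lemma merge_in:
  assumes "A \<subseteq> {..<N}" "a \<in> sub_idx d A" "b \<in> sub_idx d ({..<N} - A)"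
  shows "merge_idx A a b \<in> basis_idx N d"
  using assms unfolding basis_idx_def sub_idx_def merge_idx_def by (auto simp: PiE_iff extensional_def)

lemma merge_eq:
  assumes "a \<in> sub_idx d A" "a' \<in> sub_idx d A" "b \<in> sub_idx d ({..<N} - A)" "b' \<in> sub_idx d ({..<N} - A)"
  shows "(merge_idx A a b = merge_idx A a' b') = (a = a' \<and> b = b')"
proof
  assume h: "merge_idx A a b = merge_idx A a' b'"
  have "a x = a' x" for x
  proof (cases "x \<in> A")
    case True then show ?thesis using fun_cong[OF h, of x] by (simp add: merge_idx_def)
  next
    case False
    have "a x = undefined" "a' x = undefined"
      using PiE_arb[OF assms(1)[unfolded sub_idx_def] False] PiE_arb[OF assms(2)[unfolded sub_idx_def] False] by auto
    then show ?thesis by simp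
  qed
  moreover have "b x = b' x" for x
  proof (cases "x \<in> A")
    case False then show ?thesis using fun_cong[OF h, of x] by (simp add: merge_idx_def)
  next
    case True
    then have nx: "x \<notin> {..<N} - A" by simp
    have "b x = undefined" "b' x = undefined"
      using PiE_arb[OF assms(3)[unfolded sub_idx_def] nx] PiE_arb[OF assms(4)[unfolded sub_idx_def] nx] by auto
    then show ?thesis by simp
  qed
  ultimately show "a = a' \<and> b = b'" by auto
qed simp

lemma card_sub: "card (sub_idx d A) = (\<Prod>i\<in>A. d i)" if "finite A"
  unfolding sub_idx_def using that by (simp add: card_PiE)

lemma finite_sub: "finite A \<Longrightarrow> finite (sub_idx d A)"
  unfolding sub_idx_def by (simp add: finite_PiE)

lemma comb_sum:
  fixes f :: "'a \<Rightarrow> 'a \<Rightarrow> 'b \<Rightarrow> 'b \<Rightarrow> complex"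
  assumes "finite SA" "finite SB"
    and val: "\<And>a a' b b'. a \<in> SA \<Longrightarrow> a' \<in> SA \<Longrightarrow> b \<in> SB \<Longrightarrow> b' \<in> SB \<Longrightarrow>
      f a a' b b' = (if a = a' then (if b = b' then \<beta> else \<alpha>) else (if b = b' then \<alpha> else 0))"
  shows "(\<Sum>a\<in>SA. \<Sum>a'\<in>SA. \<Sum>b\<in>SB. \<Sum>b'\<in>SB. f a a' b b') =
    of_nat (card SA) * of_nat (card SB) * (\<beta> + of_nat (card SB - 1) * \<alpha>)
    + of_nat (card SA) * of_nat (card SA - 1) * of_nat (card SB) * \<alpha>"
proof -
  have inner: "(\<Sum>b\<in>SB. \<Sum>b'\<in>SB. f a a' b b') =
     (if a = a' then of_nat (card SB) * (\<beta> + of_nat (card SB - 1) * \<alpha>) else of_nat (card SB) * \<alpha>)"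
    if "a \<in> SA" "a' \<in> SA" for a a'
  proof (cases "a = a'")
    case True
    have "(\<Sum>b\<in>SB. \<Sum>b'\<in>SB. f a a' b b') = (\<Sum>b\<in>SB. \<Sum>b'\<in>SB. if b = b' then \<beta> else \<alpha>)"
      using that True by (intro sum.cong refl) (simp add: val)
    also have "\<dots> = (\<Sum>b\<in>SB. \<beta> + of_nat (card SB - 1) * \<alpha>)"
      by (intro sum.cong refl) (simp add: sum_if_eq assms(2))
    finally show ?thesis using True by simp
  next
    case False
    have "(\<Sum>b\<in>SB. \<Sum>b'\<in>SB. f a a' b b') = (\<Sum>b\<in>SB. \<Sum>b'\<in>SB. if b = b' then \<alpha> else 0)"
      using that False by (intro sum.cong refl) (simp add: val)
    also have "\<dots> = (\<Sum>b\<in>SB. \<alpha>)"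
      by (intro sum.cong refl) (simp add: sum.delta assms(2))
    finally show ?thesis using False by simp
  qed
  have "(\<Sum>a\<in>SA. \<Sum>a'\<in>SA. \<Sum>b\<in>SB. \<Sum>b'\<in>SB. f a a' b b') =
     (\<Sum>a\<in>SA. \<Sum>a'\<in>SA. (if a = a' then of_nat (card SB) * (\<beta> + of_nat (card SB - 1) * \<alpha>) else of_nat (card SB) * \<alpha>))"
    by (intro sum.cong refl) (simp add: inner)
  also have "\<dots> = (\<Sum>a\<in>SA. of_nat (card SB) * (\<beta> + of_nat (card SB - 1) * \<alpha>) + of_nat (card SA - 1) * (of_nat (card SB) * \<alpha>))"
    by (intro sum.cong refl) (simp add: sum_if_eq assms(1))
  also have "\<dots> = of_nat (card SA) * of_nat (card SB) * (\<beta> + of_nat (card SB - 1) * \<alpha>)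
    + of_nat (card SA) * of_nat (card SA - 1) * of_nat (card SB) * \<alpha>"
    by (simp add: algebra_simps)
  finally show ?thesis .
qed


lemma bip_sub: "A \<in> bipartitions N \<Longrightarrow> A \<subseteq> {..<N}"
  unfolding bipartitions_def by auto

lemma finite_bip: "finite (bipartitions N)"
proof -
  have "bipartitions N \<subseteq> Pow {..<N}" unfolding bipartitions_def by auto
  then show ?thesis by (rule finite_subset) simp
qed

lemma card_bip:
  assumes "N \<ge> 1"
  shows "card (bipartitions N) = 2 ^ (N - 1) - 1"
proof -
  let ?S = "{1..<N}"
  have eq: "bipartitions N = insert 0 ` (Pow ?S - {?S})"
  proof
    show "bipartitions N \<subseteq> insert 0 ` (Pow ?S - {?S})"
    proof
      fix A assume A: "A \<in> bipartitions N"
      then have A0: "0 \<in> A" "A \<subseteq> {..<N}" "A \<noteq> {..<N}" unfolding bipartitions_def by auto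
      have "A - {0} \<in> Pow ?S - {?S}"
      proof
        show "A - {0} \<in> Pow ?S" using A0 by auto
        show "A - {0} \<notin> {?S}"
        proof
          assume "A - {0} \<in> {?S}"
          then have "A - {0} = ?S" by simp
          then have "A = {..<N}" using A0 assms by (auto; metis atLeastLessThan_iff Diff_iff insertE lessThan_iff less_one not_less)
          then show False using A0 by simp
        qed
      qed
      moreover have "A = insert 0 (A - {0})" using A0 by auto
      ultimately show "A \<in> insert 0 ` (Pow ?S - {?S})" by blast
    qed
  next
    show "insert 0 ` (Pow ?S - {?S}) \<subseteq> bipartitions N"
    proof
      fix A assume "A \<in> insert 0 ` (Pow ?S - {?S})"
      then obtain B where B: "B \<subseteq> ?S" "B \<noteq> ?S" "A = insert 0 B" by auto
      have "A \<subseteq> {..<N}" using B assms by auto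
      moreover have "A \<noteq> {..<N}"
      proof
        assume "A = {..<N}"
        have "x \<in> B" if "x \<in> ?S" for x
        proof -
          have "x \<in> insert 0 B" using that \<open>A = {..<N}\<close> B(3) by auto
          then show ?thesis using that by auto
        qed
        then have "B = ?S" using B by auto
        then show False using B by simp
      qed
      ultimately show "A \<in> bipartitions N" unfolding bipartitions_def using B by auto
    qed
  qed
  have inj: "inj_on (insert 0) (Pow ?S - {?S})"
  proof (rule inj_onI)
    fix x y assume "x \<in> Pow ?S - {?S}" "y \<in> Pow ?S - {?S}" "insert 0 x = insert (0::nat) y"
    then have "0 \<notin> x" "0 \<notin> y" by auto
    then have "x = insert 0 x - {0}" "y = insert 0 y - {0}" by auto
    then show "x = y" using \<open>insert 0 x = insert 0 y\<close> by simp
  qed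
  have "card (bipartitions N) = card (Pow ?S - {?S})" unfolding eq by (rule card_image[OF inj])
  also have "\<dots> = 2 ^ (N - 1) - 1" by (simp add: card_Diff_singleton card_Pow)
  finally show ?thesis .
qed

lemma card_basis: "card (basis_idx N d) = (\<Prod>i<N. d i)"
  unfolding basis_idx_def sub_idx_def by (simp add: card_PiE)

lemma finite_basis: "finite (basis_idx N d)"
  unfolding basis_idx_def sub_idx_def by (simp add: finite_PiE)

lemma card_split:
  fixes N :: nat and d :: "nat \<Rightarrow> nat"
  assumes "A \<subseteq> {..<N}"
  shows "(\<Prod>i\<in>A. d i) * (\<Prod>i\<in>{..<N} - A. d i) = (\<Prod>i<N. d i)"
proof -
  have "{..<N} = A \<union> ({..<N} - A)" using assms by auto
  then have "(\<Prod>i<N. d i) = (\<Prod>i\<in>A \<union> ({..<N} - A). d i)" by simp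
  also have "\<dots> = (\<Prod>i\<in>A. d i) * (\<Prod>i\<in>{..<N} - A. d i)"
  proof (rule prod.union_disjoint)
    show "finite A" by (rule finite_subset[OF assms]) simp
  qed auto
  finally show ?thesis by simp
qed

definition Ef :: "complex \<Rightarrow> complex \<Rightarrow> complex \<Rightarrow> 'i \<Rightarrow> 'i \<Rightarrow> 'i \<Rightarrow> 'i \<Rightarrow> complex" where
  "Ef aa bb cc i j k l = (if i=j \<and> j=k \<and> k=l then bb else if i=j \<and> k=l then aa
     else if i=l \<and> j=k then aa else if i=k \<and> j=l then cc else 0)"

lemma Ssum:
  assumes A: "A \<subseteq> {..<N}"
    and form: "\<And>i j k l. i \<in> basis_idx N d \<Longrightarrow> j \<in> basis_idx N d \<Longrightarrow> k \<in> basis_idx N d \<Longrightarrow> l \<in> basis_idx N d \<Longrightarrow>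
      F i j k l = Ef aa bb cc i j k l"
  shows "(\<Sum>a\<in>sub_idx d A. \<Sum>a'\<in>sub_idx d A. \<Sum>b\<in>sub_idx d ({..<N} - A). \<Sum>b'\<in>sub_idx d ({..<N} - A).
     F (merge_idx A a b) (merge_idx A a' b) (merge_idx A a' b') (merge_idx A a b')) =
    of_nat (card (sub_idx d A)) * of_nat (card (sub_idx d ({..<N} - A))) * (bb + of_nat (card (sub_idx d ({..<N} - A)) - 1) * aa)
    + of_nat (card (sub_idx d A)) * of_nat (card (sub_idx d A) - 1) * of_nat (card (sub_idx d ({..<N} - A))) * aa"
proof (rule comb_sum)
  show "finite (sub_idx d A)" "finite (sub_idx d ({..<N} - A))"
  proof -
    have "finite A" by (rule finite_subset[OF A]) simp
    then show "finite (sub_idx d A)" "finite (sub_idx d ({..<N} - A))" by (auto intro: finite_sub)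
  qed
next
  fix a a' b b' assume h: "a \<in> sub_idx d A" "a' \<in> sub_idx d A" "b \<in> sub_idx d ({..<N} - A)" "b' \<in> sub_idx d ({..<N} - A)"
  have e1: "(merge_idx A a b = merge_idx A a' b) = (a = a')" using merge_eq[OF h(1,2) h(3) h(3)] by simp
  have e2: "(merge_idx A a' b = merge_idx A a' b') = (b = b')" using merge_eq[OF h(2,2) h(3,4)] by simp
  have e3: "(merge_idx A a' b' = merge_idx A a b') = (a = a')" using merge_eq[OF h(2,1) h(4,4)] by auto
  have e4: "(merge_idx A a b = merge_idx A a b') = (b = b')" using merge_eq[OF h(1,1) h(3,4)] by simp
  have e5: "(merge_idx A a b = merge_idx A a' b') = (a = a' \<and> b = b')" using merge_eq[OF h] by simp
  have e6: "(merge_idx A a' b = merge_idx A a b') = (a = a' \<and> b = b')" using merge_eq[OF h(2,1,3,4)] by auto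
  show "F (merge_idx A a b) (merge_idx A a' b) (merge_idx A a' b') (merge_idx A a b') =
     (if a = a' then (if b = b' then bb else aa) else (if b = b' then aa else 0))"
    by (subst form) (auto simp: merge_in A h Ef_def e1 e2 e3 e4 e5 e6)
qed


lemma ps_sum:
  fixes f :: "complex \<Rightarrow> 'a::comm_ring_1"
  assumes mult: "\<And>x y. f (x * y) = f x * f y" and one: "f 1 = 1"
  shows "(\<Sum>x\<in>basis_idx N d. f (product_state N \<psi> x)) = (\<Prod>i<N. \<Sum>k<d i. f (\<psi> i k))"
proof -
  have fp: "f (\<Prod>i\<in>S. g i) = (\<Prod>i\<in>S. f (g i))" for S :: "nat set" and g
  proof (induction S rule: infinite_finite_induct)
    case (insert x F) then show ?case by (simp add: mult)
  qed (simp_all add: one)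
  have "(\<Prod>i<N. \<Sum>k<d i. f (\<psi> i k)) = (\<Sum>g\<in>PiE {..<N} (\<lambda>i. {..<d i}). \<Prod>i<N. f (\<psi> i (g i)))"
    by (rule prod_sum_PiE) auto
  also have "\<dots> = (\<Sum>x\<in>basis_idx N d. f (product_state N \<psi> x))"
    unfolding basis_idx_def sub_idx_def product_state_def by (simp add: fp)
  finally show ?thesis by simp
qed

lemma ps_norm: "(\<Sum>x\<in>basis_idx N d. (cmod (product_state N \<psi> x))\<^sup>2) = (\<Prod>i<N. \<Sum>k<d i. (cmod (\<psi> i k))\<^sup>2)"
  using ps_sum[of "\<lambda>z. (cmod z)\<^sup>2"] by (simp add: norm_mult power_mult_distrib)

lemma ps_sq: "(\<Sum>x\<in>basis_idx N d. (product_state N \<psi> x)\<^sup>2) = (\<Prod>i<N. \<Sum>k<d i. (\<psi> i k)\<^sup>2)"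
  using ps_sum[of "\<lambda>z. z\<^sup>2"] by (simp add: power_mult_distrib)

lemma unitary_entry:
  assumes "V \<in> unitary_group I" "finite I" "x \<in> I" "y \<in> I"
  shows "cmod (V x y) \<le> 1"
proof -
  have "(\<Sum>k\<in>I. cnj (V k y) * V k y) = 1" using assms unfolding unitary_group_def by auto
  then have "complex_of_real (\<Sum>k\<in>I. (cmod (V k y))\<^sup>2) = 1"
    unfolding of_real_sum by (metis (no_types, lifting) complex_norm_square mult.commute sum.cong)
  then have s: "(\<Sum>k\<in>I. (cmod (V k y))\<^sup>2) = 1" by (simp only: of_real_eq_1_iff)
  have "(cmod (V x y))\<^sup>2 \<le> (\<Sum>k\<in>I. (cmod (V k y))\<^sup>2)"
    by (rule member_le_sum) (use assms in auto)
  then have "(cmod (V x y))\<^sup>2 \<le> 1\<^sup>2" using s by simp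
  then show ?thesis by (rule power2_le_imp_le) simp
qed


locale setup0 =
  fixes N :: nat and d :: "nat \<Rightarrow> nat" and \<sigma> :: "nat \<Rightarrow> (nat \<Rightarrow> complex) measure"
  assumes N2: "N \<ge> 2" and d2: "\<And>i. i < N \<Longrightarrow> d i \<ge> 2"
    and sph: "\<And>i. i < N \<Longrightarrow> uniform_sphere {..<d i} (\<sigma> i)"
begin

abbreviation "I \<equiv> basis_idx N d"
abbreviation "P \<equiv> PiM {..<N} \<sigma>"

lemma probP: "prob_space P"
  by (rule prob_space_PiM) (use sph in \<open>auto simp: uniform_sphere_def\<close>)

lemma sets_sigma: "i < N \<Longrightarrow> sets (\<sigma> i) = sets (vec_space {..<d i})"
  using sph unfolding uniform_sphere_def by auto

lemma comp_meas:
  assumes "i < N" "k < d i"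
  shows "(\<lambda>\<psi>. \<psi> i k) \<in> borel_measurable P"
proof -
  have "(\<lambda>z. z k) \<in> borel_measurable (\<sigma> i)"
    using vcomp_meas[of k "{..<d i}"] measurable_cong_sets[OF sets_sigma[OF assms(1)] refl] assms by auto
  moreover have "(\<lambda>\<psi>. \<psi> i) \<in> measurable P (\<sigma> i)"
    by (rule measurable_component_singleton) (use assms in auto)
  ultimately show ?thesis using measurable_compose by fastforce
qed

lemma ps_meas:
  assumes "x \<in> I"
  shows "(\<lambda>\<psi>. product_state N \<psi> x) \<in> borel_measurable P"
  unfolding product_state_def
proof (rule borel_measurable_prod)
  fix i assume "i \<in> {..<N}"
  then show "(\<lambda>\<psi>. \<psi> i (x i)) \<in> borel_measurable P"
    using assms by (intro comp_meas) (auto simp: basis_idx_def sub_idx_def)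
qed

lemma AE_unit_i: "AE \<psi> in P. \<forall>i\<in>{..<N}. (\<Sum>k<d i. (cmod (\<psi> i k))\<^sup>2) = 1"
proof (rule eventually_ball_finite)
  show "finite {..<N}" by simp
  show "\<forall>i\<in>{..<N}. AE \<psi> in P. (\<Sum>k<d i. (cmod (\<psi> i k))\<^sup>2) = 1"
  proof
    fix i assume i: "i \<in> {..<N}"
    have "AE z in \<sigma> i. z \<in> unit_sphere_on {..<d i}"
      using AE_set1[of "\<sigma> i"] sph i unfolding uniform_sphere_def by auto
    then have "AE z in \<sigma> i. (\<Sum>k<d i. (cmod (z k))\<^sup>2) = 1"
      by eventually_elim (simp add: unit_sphere_on_def)
    moreover have ps: "\<And>j. j \<in> {..<N} \<Longrightarrow> prob_space (\<sigma> j)"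
      using sph unfolding uniform_sphere_def by auto
    ultimately show "AE \<psi> in P. (\<Sum>k<d i. (cmod (\<psi> i k))\<^sup>2) = 1"
      using AE_PiM_component[of "{..<N}" \<sigma> i "\<lambda>z. (\<Sum>k<d i. (cmod (z k))\<^sup>2) = 1"] ps i by blast
  qed
qed

lemma AE_unit: "AE \<psi> in P. (\<Sum>x\<in>I. (cmod (product_state N \<psi> x))\<^sup>2) = 1"
  using AE_unit_i by eventually_elim (simp add: ps_norm)

lemma le1_of_sum:
  fixes f :: "'a \<Rightarrow> complex"
  assumes "finite S" "(\<Sum>x\<in>S. (cmod (f x))\<^sup>2) = 1" "x \<in> S"
  shows "cmod (f x) \<le> 1"
proof -
  have "(cmod (f x))\<^sup>2 \<le> (\<Sum>x\<in>S. (cmod (f x))\<^sup>2)" by (rule member_le_sum) (use assms in auto)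
  then have "(cmod (f x))\<^sup>2 \<le> 1\<^sup>2" using assms by simp
  then show ?thesis by (rule power2_le_imp_le) simp
qed

lemma int_psmono:
  assumes "p \<in> I" "q \<in> I" "r \<in> I" "s \<in> I"
  shows "integrable P (\<lambda>\<psi>. product_state N \<psi> p * cnj (product_state N \<psi> q) * product_state N \<psi> r * cnj (product_state N \<psi> s))"
proof -
  interpret prob_space P by (rule probP)
  show ?thesis
  proof (rule integrable_const_bound[where B=1])
    show "AE \<psi> in P. norm (product_state N \<psi> p * cnj (product_state N \<psi> q) * product_state N \<psi> r * cnj (product_state N \<psi> s)) \<le> 1"
      using AE_unit
    proof eventually_elim
      case (elim \<psi>)
      have b: "cmod (product_state N \<psi> x) \<le> 1" if "x \<in> I" for x
        by (rule le1_of_sum[OF finite_basis elim that])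
      show ?case using b[OF assms(1)] b[OF assms(2)] b[OF assms(3)] b[OF assms(4)]
        by (simp add: norm_mult mult_le_one)
    qed
    show "(\<lambda>\<psi>. product_state N \<psi> p * cnj (product_state N \<psi> q) * product_state N \<psi> r * cnj (product_state N \<psi> s)) \<in> borel_measurable P"
      using ps_meas assms by measurable
  qed
qed


lemma fsA: "A \<in> bipartitions N \<Longrightarrow> finite (sub_idx d A)"
  by (rule finite_sub, rule finite_subset[OF bip_sub]) auto
lemma fsB: "A \<in> bipartitions N \<Longrightarrow> finite (sub_idx d ({..<N} - A))"
  by (rule finite_sub) auto

definition HH :: "((nat \<Rightarrow> nat) \<Rightarrow> complex) \<Rightarrow> complex" where
  "HH w = (\<Sum>A\<in>bipartitions N. Sfun N d A w)"

lemma sep_HH: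
  assumes "\<And>i j k l. i \<in> I \<Longrightarrow> j \<in> I \<Longrightarrow> k \<in> I \<Longrightarrow> l \<in> I \<Longrightarrow>
     sepf M1 P (\<lambda>x \<psi>. mono (matvec I (W x) (product_state N \<psi>)) i j k l)"
  shows "sepf M1 P (\<lambda>x \<psi>. HH (matvec I (W x) (product_state N \<psi>)))"
  unfolding HH_def Sfun_def
proof (intro sep_sum finite_bip)
  fix A a a' b b' assume h: "A \<in> bipartitions N" "a \<in> sub_idx d A" "a' \<in> sub_idx d A"
    "b \<in> sub_idx d ({..<N} - A)" "b' \<in> sub_idx d ({..<N} - A)"
  have A: "A \<subseteq> {..<N}" using h(1) by (rule bip_sub)
  show "sepf M1 P (\<lambda>x \<psi>. mono (matvec I (W x) (product_state N \<psi>)) (merge_idx A a b) (merge_idx A a' b) (merge_idx A a' b') (merge_idx A a b'))"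
    by (intro assms merge_in A h)
qed (auto intro: fsA fsB)

lemma Kpos: "(2::real) ^ (N - 1) - 1 > 0"
proof -
  have "(2::real) ^ (N - 1) \<ge> 2 ^ 1" by (rule power_increasing) (use N2 in auto)
  then show ?thesis by simp
qed

lemma one_tangle_eq: "one_tangle N d w = 2 - (2 / ((2::real) ^ (N - 1) - 1)) * Re (HH w)"
proof -
  let ?K = "(2::real) ^ (N - 1) - 1"
  have cb: "real (card (bipartitions N)) = ?K"
    using card_bip[of N] N2 by (simp add: of_nat_diff)
  have "one_tangle N d w = (1 / ?K) * (\<Sum>A\<in>bipartitions N. 2 * (1 - Re (Sfun N d A w)))"
    unfolding one_tangle_def tau_bip_def purity_expand by simp
  also have "\<dots> = (1 / ?K) * (2 * real (card (bipartitions N)) - 2 * Re (HH w))"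
    unfolding HH_def by (simp add: sum_subtractf sum_distrib_left Re_sum)
  also have "\<dots> = 2 - (2 / ?K) * Re (HH w)"
    using Kpos unfolding cb by (simp add: field_simps)
  finally show ?thesis .
qed

lemma int_affine:
  assumes "prob_space M" "integrable M f"
  shows "(\<integral>x. c0 - c1 * Re (f x) \<partial>M) = c0 - c1 * Re (integral\<^sup>L M f)"
proof -
  interpret prob_space M by fact
  have "integrable M (\<lambda>x. Re (f x))" using assms(2) by (rule integrable_Re)
  then show ?thesis using integral_Re[OF assms(2)] by (simp add: prob_space)
qed


lemma cardI2: "card I \<ge> 2"
proof -
  have "(\<Prod>i<N. (2::nat)) \<le> (\<Prod>i<N. d i)" by (rule prod_mono) (use d2 in auto)
  moreover have "(2::nat) \<le> 2 ^ N" using N2 by (metis one_le_numeral power_increasing power_one_right order_trans le_refl  Suc_1 Suc_leD)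
  ultimately show ?thesis by (simp add: card_basis)
qed

lemma nA_pos: "A \<subseteq> {..<N} \<Longrightarrow> (\<Prod>i\<in>A. d i) \<ge> 1"
proof -
  assume A: "A \<subseteq> {..<N}"
  have "(\<Prod>i\<in>A. (1::nat)) \<le> (\<Prod>i\<in>A. d i)" by (rule prod_mono) (use d2 A in force)
  then show ?thesis by simp
qed

lemma fin_A: "A \<in> bipartitions N \<Longrightarrow> finite A"
  by (rule finite_subset[OF bip_sub]) auto

lemma int_Sfun:
  assumes "momsetup M I X" "A \<in> bipartitions N"
  shows "(\<integral>x. Sfun N d A (X x) \<partial>M) = (\<Sum>a\<in>sub_idx d A. \<Sum>a'\<in>sub_idx d A. \<Sum>b\<in>sub_idx d ({..<N} - A). \<Sum>b'\<in>sub_idx d ({..<N} - A).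
     momsetup.E M X (merge_idx A a b) (merge_idx A a' b) (merge_idx A a' b') (merge_idx A a b'))"
proof -
  interpret momsetup M I X by fact
  have A: "A \<subseteq> {..<N}" using assms(2) by (rule bip_sub)
  show ?thesis unfolding Sfun_def E_def
    by (simp add: integral_sum integrable_sum int_mono merge_in A)
qed

lemma valU:
  fixes aa :: complex
  assumes "nA \<ge> 1" "nB \<ge> 1" "aa = 1 / (of_nat (nA*nB) * (of_nat (nA*nB) + 1))"
  shows "of_nat nA * of_nat nB * (2*aa + of_nat (nB - 1) * aa) + of_nat nA * of_nat (nA - 1) * of_nat nB * aa
    = (of_nat nA + of_nat nB) / (of_nat (nA*nB) + 1)"
proof -
  have "(of_nat (nA*nB) :: complex) + 1 \<noteq> 0" by (metis of_nat_Suc of_nat_eq_0_iff Suc_eq_plus1 nat.distinct(1) add.commute)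
  moreover have "(of_nat (nA*nB) :: complex) \<noteq> 0" using assms by simp
  ultimately have xy: "of_nat (nA*nB) * aa * (of_nat (nA*nB) + 1) = 1" using assms(3) by simp
  have "of_nat nA * of_nat nB * (2*aa + of_nat (nB - 1) * aa) + of_nat nA * of_nat (nA - 1) * of_nat nB * aa
     = (of_nat (nA*nB) * aa) * (of_nat nA + of_nat nB)" using assms(1,2) by (simp add: of_nat_diff algebra_simps)
  also have "of_nat (nA*nB) * aa = 1 / (of_nat (nA*nB) + 1)"
    using xy \<open>(of_nat (nA*nB) :: complex) + 1 \<noteq> 0\<close> by (simp add: field_simps)
  finally show ?thesis by simp
qed

lemma innerU:
  assumes haar: "haar_unitary I \<mu>" and unit: "(\<Sum>x\<in>I. (cmod (\<phi> x))\<^sup>2) = 1"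
  shows "(\<integral>U. HH (matvec I U \<phi>) \<partial>\<mu>) =
     (\<Sum>A\<in>bipartitions N. (of_nat (\<Prod>i\<in>A. d i) + of_nat (\<Prod>i\<in>{..<N} - A. d i)) / (of_nat (\<Prod>i<N. d i) + 1))"
proof -
  interpret M: momsetupU \<mu> I "\<lambda>U. matvec I U \<phi>" by (rule momU[OF haar finite_basis cardI2 unit])
  have each: "(\<integral>U. Sfun N d A (matvec I U \<phi>) \<partial>\<mu>) =
     (of_nat (\<Prod>i\<in>A. d i) + of_nat (\<Prod>i\<in>{..<N} - A. d i)) / (of_nat (\<Prod>i<N. d i) + 1)"
    if A: "A \<in> bipartitions N" for A
  proof -
    have As: "A \<subseteq> {..<N}" using A by (rule bip_sub)
    have fA: "finite A" using A by (rule fin_A)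
    have D: "(\<Prod>i<N. d i) = (\<Prod>i\<in>A. d i) * (\<Prod>i\<in>{..<N} - A. d i)" using card_split[OF As] by simp
    have "(\<integral>U. Sfun N d A (matvec I U \<phi>) \<partial>\<mu>) = (\<Sum>a\<in>sub_idx d A. \<Sum>a'\<in>sub_idx d A. \<Sum>b\<in>sub_idx d ({..<N} - A). \<Sum>b'\<in>sub_idx d ({..<N} - A).
     M.E (merge_idx A a b) (merge_idx A a' b) (merge_idx A a' b') (merge_idx A a b'))"
      by (rule int_Sfun[OF M.momsetup_axioms A])
    also have "\<dots> = of_nat (card (sub_idx d A)) * of_nat (card (sub_idx d ({..<N} - A))) * (M.bb + of_nat (card (sub_idx d ({..<N} - A)) - 1) * M.aa)
    + of_nat (card (sub_idx d A)) * of_nat (card (sub_idx d A) - 1) * of_nat (card (sub_idx d ({..<N} - A))) * M.aa"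
      by (rule Ssum[OF As]) (simp add: M.E_formula Ef_def)
    also have "\<dots> = (of_nat (\<Prod>i\<in>A. d i) + of_nat (\<Prod>i\<in>{..<N} - A. d i)) / (of_nat (\<Prod>i<N. d i) + 1)"
      unfolding card_sub[OF fA] card_sub[OF finite_Diff[OF finite_lessThan[of N]]] M.unit_vals(2) D
      by (rule valU) (use M.unit_vals(1) nA_pos[OF As] nA_pos[of "{..<N} - A"] in \<open>auto simp: card_basis D\<close>)
    finally show ?thesis .
  qed
  have "(\<integral>U. HH (matvec I U \<phi>) \<partial>\<mu>) = (\<Sum>A\<in>bipartitions N. \<integral>U. Sfun N d A (matvec I U \<phi>) \<partial>\<mu>)"
    unfolding HH_def
  proof (rule Bochner_Integration.integral_sum)
    fix A assume A: "A \<in> bipartitions N"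
    show "integrable \<mu> (\<lambda>U. Sfun N d A (matvec I U \<phi>))"
      unfolding Sfun_def using bip_sub[OF A] by (simp add: M.int_mono merge_in)
  qed
  also have "\<dots> = (\<Sum>A\<in>bipartitions N. (of_nat (\<Prod>i\<in>A. d i) + of_nat (\<Prod>i\<in>{..<N} - A. d i)) / (of_nat (\<Prod>i<N. d i) + 1))"
    by (rule sum.cong) (auto simp: each)
  finally show ?thesis .
qed

end

lemma int_Umono:
  assumes haar: "haar_unitary I \<mu>" and fin: "finite I"
    and "i \<in> I" "j \<in> I" "k \<in> I" "l \<in> I" "p \<in> I" "q \<in> I" "r \<in> I" "s \<in> I"
  shows "integrable \<mu> (\<lambda>U. U i p * cnj (U j q) * U k r * cnj (U l s))"
proof -
  have ps: "prob_space \<mu>" and sets: "sets \<mu> = sets (mat_space I)" and em: "emeasure \<mu> (unitary_group I) = 1"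
    using haar unfolding haar_unitary_def by auto
  interpret prob_space \<mu> by (rule ps)
  have m: "(\<lambda>U. U x y) \<in> borel_measurable \<mu>" if "x \<in> I" "y \<in> I" for x y
    using ent_meas[OF that] measurable_cong_sets[OF sets refl] by blast
  show ?thesis
  proof (rule integrable_const_bound[where B=1])
    show "AE U in \<mu>. norm (U i p * cnj (U j q) * U k r * cnj (U l s)) \<le> 1"
      using AE_set1[OF ps em]
    proof eventually_elim
      case (elim U)
      have b: "cmod (U x y) \<le> 1" if "x \<in> I" "y \<in> I" for x y by (rule unitary_entry[OF elim fin that])
      show ?case using b assms by (simp add: norm_mult mult_le_one)
    qed
    show "(\<lambda>U. U i p * cnj (U j q) * U k r * cnj (U l s)) \<in> borel_measurable \<mu>"
      using m assms by measurable
  qed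
qed

lemma int_Omono:
  assumes haar: "haar_orthogonal I \<mu>" and fin: "finite I"
    and "i \<in> I" "j \<in> I" "k \<in> I" "l \<in> I" "p \<in> I" "q \<in> I" "r \<in> I" "s \<in> I"
  shows "integrable \<mu> (\<lambda>Q. cmat I Q i p * cnj (cmat I Q j q) * cmat I Q k r * cnj (cmat I Q l s))"
proof -
  have ps: "prob_space \<mu>" and sets: "sets \<mu> = sets (mat_space I)" and em: "emeasure \<mu> (orthogonal_group I) = 1"
    using haar unfolding haar_orthogonal_def by auto
  interpret prob_space \<mu> by (rule ps)
  have m: "(\<lambda>Q. cmat I Q x y) \<in> borel_measurable \<mu>" if "x \<in> I" "y \<in> I" for x y
  proof -
    have "(\<lambda>Q. Q x y) \<in> borel_measurable \<mu>"
      using ent_meas[OF that] measurable_cong_sets[OF sets refl] by blast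
    then have "(\<lambda>Q. complex_of_real (Q x y)) \<in> borel_measurable \<mu>" by simp
    then show ?thesis using that by (simp add: cmat_def)
  qed
  show ?thesis
  proof (rule integrable_const_bound[where B=1])
    show "AE Q in \<mu>. norm (cmat I Q i p * cnj (cmat I Q j q) * cmat I Q k r * cnj (cmat I Q l s)) \<le> 1"
      using AE_set1[OF ps em]
    proof eventually_elim
      case (elim Q)
      have b: "cmod (cmat I Q x y) \<le> 1" if "x \<in> I" "y \<in> I" for x y
        by (rule unitary_entry[OF cmat_unitary[OF elim] fin that])
      show ?case using b assms by (simp add: norm_mult mult_le_one)
    qed
    show "(\<lambda>Q. cmat I Q i p * cnj (cmat I Q j q) * cmat I Q k r * cnj (cmat I Q l s)) \<in> borel_measurable \<mu>"
      using m assms by measurable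
  qed
qed


context setup0 begin

lemma sepGU:
  assumes haar: "haar_unitary I \<mu>"
  shows "sepf \<mu> P (\<lambda>U \<psi>. HH (matvec I U (product_state N \<psi>)))"
proof (rule sep_HH[where W="\<lambda>U. U"])
  fix i j k l assume "i \<in> I" "j \<in> I" "k \<in> I" "l \<in> I"
  then show "sepf \<mu> P (\<lambda>U \<psi>. mono (matvec I U (product_state N \<psi>)) i j k l)"
    by (intro sep_mono[where W="\<lambda>U. U"] finite_basis int_Umono[OF haar finite_basis] int_psmono)
qed

lemma Re_val: "Re (\<Sum>A\<in>bipartitions N. (of_nat (\<Prod>i\<in>A. d i) + of_nat (\<Prod>i\<in>{..<N} - A. d i)) / (of_nat (\<Prod>i<N. d i) + (1::complex)))
   = (\<Sum>A\<in>bipartitions N. (\<Prod>i\<in>A. real (d i)) + (\<Prod>i\<in>{..<N} - A. real (d i))) / ((\<Prod>i<N. real (d i)) + 1)"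
proof -
  have "(\<Sum>A\<in>bipartitions N. (of_nat (\<Prod>i\<in>A. d i) + of_nat (\<Prod>i\<in>{..<N} - A. d i)) / (of_nat (\<Prod>i<N. d i) + (1::complex)))
     = complex_of_real ((\<Sum>A\<in>bipartitions N. (\<Prod>i\<in>A. real (d i)) + (\<Prod>i\<in>{..<N} - A. real (d i))) / ((\<Prod>i<N. real (d i)) + 1))"
    by (simp add: sum_divide_distrib of_real_sum)
  then show ?thesis by (metis Re_complex_of_real)
qed

lemma mainU:
  assumes haar: "haar_unitary I \<mu>"
  shows "(\<integral>U. entangling_power N d \<sigma> U \<partial>\<mu>) = 2 - (2 / ((2::real) ^ (N - 1) - 1)) *
     ((\<Sum>A\<in>bipartitions N. (\<Prod>i\<in>A. real (d i)) + (\<Prod>i\<in>{..<N} - A. real (d i))) / ((\<Prod>i<N. real (d i)) + 1))"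
proof -
  let ?G = "\<lambda>U \<psi>. HH (matvec I U (product_state N \<psi>))"
  let ?c = "(\<Sum>A\<in>bipartitions N. (of_nat (\<Prod>i\<in>A. d i) + of_nat (\<Prod>i\<in>{..<N} - A. d i)) / (of_nat (\<Prod>i<N. d i) + (1::complex)))"
  have sG: "sepf \<mu> P ?G" by (rule sepGU[OF haar])
  have psmu: "prob_space \<mu>" using haar unfolding haar_unitary_def by auto
  have ep: "entangling_power N d \<sigma> U = 2 - (2 / ((2::real) ^ (N - 1) - 1)) * Re (\<integral>\<psi>. ?G U \<psi> \<partial>P)" for U
    unfolding entangling_power_def one_tangle_eq by (rule int_affine[OF probP sep_int2[OF sG]])
  have "(\<integral>U. entangling_power N d \<sigma> U \<partial>\<mu>) = 2 - (2 / ((2::real) ^ (N - 1) - 1)) * Re (\<integral>U. (\<integral>\<psi>. ?G U \<psi> \<partial>P) \<partial>\<mu>)"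
    unfolding ep by (rule int_affine[OF psmu sep_ii1[OF sG]])
  also have "(\<integral>U. (\<integral>\<psi>. ?G U \<psi> \<partial>P) \<partial>\<mu>) = (\<integral>\<psi>. (\<integral>U. ?G U \<psi> \<partial>\<mu>) \<partial>P)"
    by (rule sep_swap[OF sG])
  also have "\<dots> = (\<integral>\<psi>. ?c \<partial>P)"
  proof (rule integral_cong_AE)
    show "(\<lambda>\<psi>. \<integral>U. ?G U \<psi> \<partial>\<mu>) \<in> borel_measurable P"
      by (rule borel_measurable_integrable[OF sep_ii2[OF sG]])
    show "(\<lambda>\<psi>. ?c) \<in> borel_measurable P" by simp
    show "AE \<psi> in P. (\<integral>U. ?G U \<psi> \<partial>\<mu>) = ?c"
      using AE_unit by eventually_elim (rule innerU[OF haar])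
  qed
  also have "\<dots> = ?c" using probP by (simp add: prob_space.prob_space)
  finally show ?thesis by (simp only: Re_val)
qed

end


lemma alg_O:
  fixes aa bb cc t :: complex and x y :: complex
  assumes D: "D = x * y" "D \<noteq> 0" "D - 1 \<noteq> 0" "D + 2 \<noteq> 0"
    and h1: "bb = 2 * aa + cc" and h2: "D * bb + D * (D - 1) * aa = 1" and h3: "D * bb + D * (D - 1) * cc = t"
  shows "x * y * (bb + (y - 1) * aa) + x * (x - 1) * y * aa = (t * (D + 1) - 2 + (D - t) * (x + y)) / ((D - 1) * (D + 2))"
proof -
  define u where "u = D * aa"
  define v where "v = D * bb"
  define w where "w = D * cc"
  have g1: "v = 2 * u + w" unfolding u_def v_def w_def h1 by (simp add: algebra_simps)
  have g2: "v + (D - 1) * u = 1" using h2 unfolding u_def v_def by (simp add: algebra_simps)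
  have g3: "v + (D - 1) * w = t" using h3 unfolding v_def w_def by (simp add: algebra_simps)
  have "D - t = D * (v + (D - 1) * u) - (v + (D - 1) * w)" using g2 g3 by simp
  also have "\<dots> = (D - 1) * (D + 2) * u" unfolding g1 by (simp add: algebra_simps)
  finally have "(D - 1) * (D + 2) * u = D - t" by simp
  moreover have "(D - 1) * (D + 2) \<noteq> 0" using D(3,4) by simp
  ultimately have uval: "u = (D - t) / ((D - 1) * (D + 2))" by (simp add: eq_divide_eq ac_simps)
  have "x * y * (bb + (y - 1) * aa) + x * (x - 1) * y * aa = v + (x + y - 2) * u"
    unfolding u_def v_def D(1) by (simp add: algebra_simps)
  also have "\<dots> = 1 + (x + y - 2 - (D - 1)) * u" using g2 by (simp add: algebra_simps)
  also have "\<dots> = ((D - 1) * (D + 2) + (x + y - 2 - (D - 1)) * (D - t)) / ((D - 1) * (D + 2))"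
    unfolding uval using \<open>(D - 1) * (D + 2) \<noteq> 0\<close> by (simp add: add_divide_eq_iff)
  also have "(D - 1) * (D + 2) + (x + y - 2 - (D - 1)) * (D - t) = t * (D + 1) - 2 + (D - t) * (x + y)"
    by (simp add: algebra_simps)
  finally show ?thesis .
qed

context setup0 begin

definition tsq :: "((nat \<Rightarrow> nat) \<Rightarrow> complex) \<Rightarrow> complex" where
  "tsq \<phi> = (\<Sum>x\<in>I. (\<phi> x)\<^sup>2) * cnj (\<Sum>x\<in>I. (\<phi> x)\<^sup>2)"

lemma innerO:
  assumes haar: "haar_orthogonal I \<mu>" and unit: "(\<Sum>x\<in>I. (cmod (\<phi> x))\<^sup>2) = 1"
  shows "(\<integral>Q. HH (matvec I (cmat I Q) \<phi>) \<partial>\<mu>) =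
     (\<Sum>A\<in>bipartitions N. (tsq \<phi> * (of_nat (\<Prod>i<N. d i) + 1) - 2 + (of_nat (\<Prod>i<N. d i) - tsq \<phi>) *
        (of_nat (\<Prod>i\<in>A. d i) + of_nat (\<Prod>i\<in>{..<N} - A. d i))) / ((of_nat (\<Prod>i<N. d i) - 1) * (of_nat (\<Prod>i<N. d i) + 2)))"
proof -
  interpret M: momsetup \<mu> I "\<lambda>Q. matvec I (cmat I Q) \<phi>" by (rule momO(1)[OF haar finite_basis cardI2 unit])
  let ?D = "of_nat (\<Prod>i<N. d i) :: complex"
  have Dc: "?D = of_nat (card I)" by (simp add: card_basis)
  have D2: "(\<Prod>i<N. d i) \<ge> 2" using cardI2 by (simp add: card_basis)
  have Dnz: "?D \<noteq> 0" "?D - 1 \<noteq> 0" "?D + 2 \<noteq> 0"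
  proof -
    show "?D \<noteq> 0" by (metis D2 of_nat_eq_0_iff not_numeral_le_zero)
    show "?D - 1 \<noteq> 0" using D2 by (metis eq_iff_diff_eq_0 of_nat_1 of_nat_eq_iff numeral_le_one_iff semiring_norm(69))
    have "?D + 2 = of_nat ((\<Prod>i<N. d i) + 2)" by simp
    then show "?D + 2 \<noteq> 0" by (metis of_nat_eq_0_iff add_is_0 zero_neq_numeral)
  qed
  have Tint: "(\<integral>Q. (\<Sum>i\<in>I. (matvec I (cmat I Q) \<phi> i)\<^sup>2) * cnj (\<Sum>i\<in>I. (matvec I (cmat I Q) \<phi> i)\<^sup>2) \<partial>\<mu>) = tsq \<phi>"
  proof -
    have "(\<integral>Q. (\<Sum>i\<in>I. (matvec I (cmat I Q) \<phi> i)\<^sup>2) * cnj (\<Sum>i\<in>I. (matvec I (cmat I Q) \<phi> i)\<^sup>2) \<partial>\<mu>) = (\<integral>Q. tsq \<phi> \<partial>\<mu>)"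
    proof (rule integral_cong_AE)
      show "(\<lambda>Q. (\<Sum>i\<in>I. (matvec I (cmat I Q) \<phi> i)\<^sup>2) * cnj (\<Sum>i\<in>I. (matvec I (cmat I Q) \<phi> i)\<^sup>2)) \<in> borel_measurable \<mu>"
        using M.measX by measurable
      show "AE Q in \<mu>. (\<Sum>i\<in>I. (matvec I (cmat I Q) \<phi> i)\<^sup>2) * cnj (\<Sum>i\<in>I. (matvec I (cmat I Q) \<phi> i)\<^sup>2) = tsq \<phi>"
        using momO(2)[OF haar finite_basis cardI2 unit] by eventually_elim (simp add: tsq_def)
    qed simp
    then show ?thesis by (simp add: M.prob_space)
  qed
  have n1: "?D * M.bb + ?D * (?D - 1) * M.aa = 1" using M.norm1 Dc by (simp add: Let_def)
  have n2: "?D * M.bb + ?D * (?D - 1) * M.cc = tsq \<phi>" using M.norm2 Dc Tint by (simp add: Let_def)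
  have each: "(\<integral>Q. Sfun N d A (matvec I (cmat I Q) \<phi>) \<partial>\<mu>) =
     (tsq \<phi> * (?D + 1) - 2 + (?D - tsq \<phi>) * (of_nat (\<Prod>i\<in>A. d i) + of_nat (\<Prod>i\<in>{..<N} - A. d i))) / ((?D - 1) * (?D + 2))"
    if A: "A \<in> bipartitions N" for A
  proof -
    have As: "A \<subseteq> {..<N}" using A by (rule bip_sub)
    have fA: "finite A" using A by (rule fin_A)
    have D: "(\<Prod>i<N. d i) = (\<Prod>i\<in>A. d i) * (\<Prod>i\<in>{..<N} - A. d i)" using card_split[OF As] by simp
    have p1: "(\<Prod>i\<in>A. d i) \<ge> 1" "(\<Prod>i\<in>{..<N} - A. d i) \<ge> 1" using nA_pos[OF As] nA_pos[of "{..<N} - A"] by auto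
    have "(\<integral>Q. Sfun N d A (matvec I (cmat I Q) \<phi>) \<partial>\<mu>) = (\<Sum>a\<in>sub_idx d A. \<Sum>a'\<in>sub_idx d A. \<Sum>b\<in>sub_idx d ({..<N} - A). \<Sum>b'\<in>sub_idx d ({..<N} - A).
     M.E (merge_idx A a b) (merge_idx A a' b) (merge_idx A a' b') (merge_idx A a b'))"
      by (rule int_Sfun[OF M.momsetup_axioms A])
    also have "\<dots> = of_nat (card (sub_idx d A)) * of_nat (card (sub_idx d ({..<N} - A))) * (M.bb + of_nat (card (sub_idx d ({..<N} - A)) - 1) * M.aa)
    + of_nat (card (sub_idx d A)) * of_nat (card (sub_idx d A) - 1) * of_nat (card (sub_idx d ({..<N} - A))) * M.aa"
      by (rule Ssum[OF As]) (simp add: M.E_formula Ef_def)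
    also have "\<dots> = of_nat (\<Prod>i\<in>A. d i) * of_nat (\<Prod>i\<in>{..<N} - A. d i) * (M.bb + (of_nat (\<Prod>i\<in>{..<N} - A. d i) - 1) * M.aa)
    + of_nat (\<Prod>i\<in>A. d i) * (of_nat (\<Prod>i\<in>A. d i) - 1) * of_nat (\<Prod>i\<in>{..<N} - A. d i) * M.aa"
      unfolding card_sub[OF fA] card_sub[OF finite_Diff[OF finite_lessThan[of N]]] using p1 by (simp add: of_nat_diff)
    also have "\<dots> = (tsq \<phi> * (?D + 1) - 2 + (?D - tsq \<phi>) * (of_nat (\<Prod>i\<in>A. d i) + of_nat (\<Prod>i\<in>{..<N} - A. d i))) / ((?D - 1) * (?D + 2))"
      by (rule alg_O[OF _ Dnz M.rot_rel n1 n2]) (simp add: D)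
    finally show ?thesis .
  qed
  have "(\<integral>Q. HH (matvec I (cmat I Q) \<phi>) \<partial>\<mu>) = (\<Sum>A\<in>bipartitions N. \<integral>Q. Sfun N d A (matvec I (cmat I Q) \<phi>) \<partial>\<mu>)"
    unfolding HH_def
  proof (rule Bochner_Integration.integral_sum)
    fix A assume A: "A \<in> bipartitions N"
    show "integrable \<mu> (\<lambda>Q. Sfun N d A (matvec I (cmat I Q) \<phi>))"
      unfolding Sfun_def using bip_sub[OF A] by (simp add: M.int_mono merge_in)
  qed
  also have "\<dots> = (\<Sum>A\<in>bipartitions N. (tsq \<phi> * (?D + 1) - 2 + (?D - tsq \<phi>) *
        (of_nat (\<Prod>i\<in>A. d i) + of_nat (\<Prod>i\<in>{..<N} - A. d i))) / ((?D - 1) * (?D + 2)))"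
    by (rule sum.cong) (auto simp: each)
  finally show ?thesis .
qed

end

definition gsq :: "nat \<Rightarrow> (nat \<Rightarrow> complex) \<Rightarrow> complex" where
  "gsq n z = (\<Sum>k<n. (z k)\<^sup>2) * cnj (\<Sum>k<n. (z k)\<^sup>2)"

lemma gsq_mono: "gsq n z = (\<Sum>k<n. \<Sum>l<n. mono z k l k l)"
  unfolding gsq_def by (simp add: mono_def sum_product power2_eq_square ac_simps)

lemma sphere_g:
  assumes sph1: "uniform_sphere {..<n} \<sigma>1" and n2: "n \<ge> 2"
  shows "integrable \<sigma>1 (gsq n)" "integral\<^sup>L \<sigma>1 (gsq n) = 2 / (of_nat n + 1)"
proof -
  interpret M: momsetupU \<sigma>1 "{..<n}" "\<lambda>z. z" by (rule momS[OF sph1]) (use n2 in auto)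
  have eq: "gsq n = (\<lambda>z. \<Sum>k<n. \<Sum>l<n. mono z k l k l)" by (rule ext) (rule gsq_mono)
  show "integrable \<sigma>1 (gsq n)" unfolding eq by (intro Bochner_Integration.integrable_sum M.int_mono) auto
  have "of_nat n * M.bb + of_nat n * (of_nat n - 1) * M.cc = integral\<^sup>L \<sigma>1 (gsq n)"
    using M.norm2 by (simp add: Let_def gsq_def[abs_def])
  then have "integral\<^sup>L \<sigma>1 (gsq n) = of_nat n * M.bb" using M.cc0 by simp
  also have "\<dots> = of_nat n * (2 / (of_nat n * (of_nat n + 1)))" using M.unit_vals by simp
  also have "\<dots> = 2 / (of_nat n + 1)"
  proof -
    have a: "(of_nat n :: complex) \<noteq> 0" using n2 by simp
    have b: "(of_nat n :: complex) + 1 \<noteq> 0" by (metis of_nat_Suc of_nat_eq_0_iff Suc_eq_plus1 nat.distinct(1) add.commute)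
    show ?thesis using a by (simp add: nonzero_mult_divide_mult_cancel_left)
  qed
  finally show "integral\<^sup>L \<sigma>1 (gsq n) = 2 / (of_nat n + 1)" .
qed

context setup0 begin

lemma tsq_prod: "tsq (product_state N \<psi>) = (\<Prod>i<N. gsq (d i) (\<psi> i))"
  unfolding tsq_def gsq_def ps_sq by (simp add: prod.distrib)

definition "\<sigma>' i = \<sigma> (if i < N then i else 0)"

lemma P_eq: "P = PiM {..<N} \<sigma>'"
  by (rule PiM_cong) (auto simp: \<sigma>'_def)

lemma psf: "product_sigma_finite \<sigma>'"
  unfolding product_sigma_finite_def
proof
  fix i
  have "uniform_sphere {..<d (if i < N then i else 0)} (\<sigma>' i)"
    unfolding \<sigma>'_def by (rule sph) (use N2 in auto)
  then have "prob_space (\<sigma>' i)" unfolding uniform_sphere_def by auto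
  then show "sigma_finite_measure (\<sigma>' i)" by (rule prob_space_imp_sigma_finite)
qed

lemma ET: "integrable P (\<lambda>\<psi>. tsq (product_state N \<psi>))"
   "(\<integral>\<psi>. tsq (product_state N \<psi>) \<partial>P) = (\<Prod>i<N. 2 / (of_nat (d i) + 1))"
proof -
  interpret product_sigma_finite \<sigma>' by (rule psf)
  have ig: "integrable (\<sigma>' i) (gsq (d i))" "integral\<^sup>L (\<sigma>' i) (gsq (d i)) = 2 / (of_nat (d i) + 1)"
    if "i \<in> {..<N}" for i
    using sphere_g[OF sph d2] that unfolding \<sigma>'_def by auto
  have tp: "(\<lambda>\<psi>. tsq (product_state N \<psi>)) = (\<lambda>\<psi>. \<Prod>i<N. gsq (d i) (\<psi> i))"
    by (rule ext) (rule tsq_prod)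
  show "integrable P (\<lambda>\<psi>. tsq (product_state N \<psi>))"
    unfolding tp P_eq by (rule product_integrable_prod) (auto intro: ig)
  show "(\<integral>\<psi>. tsq (product_state N \<psi>) \<partial>P) = (\<Prod>i<N. 2 / (of_nat (d i) + 1))"
    unfolding tp P_eq by (subst product_integral_prod) (auto simp: ig)
qed

end

lemma lin_div: "X = Y + t * Z \<Longrightarrow> X / c = Y / c + t * (Z / (c::complex))"
  by (simp add: add_divide_distrib)

context setup0 begin

lemma sepGO:
  assumes haar: "haar_orthogonal I \<mu>"
  shows "sepf \<mu> P (\<lambda>Q \<psi>. HH (matvec I (cmat I Q) (product_state N \<psi>)))"
proof (rule sep_HH[where W="cmat I"])
  fix i j k l assume "i \<in> I" "j \<in> I" "k \<in> I" "l \<in> I"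
  then show "sepf \<mu> P (\<lambda>Q \<psi>. mono (matvec I (cmat I Q) (product_state N \<psi>)) i j k l)"
    by (intro sep_mono[where W="cmat I"] finite_basis int_Omono[OF haar finite_basis] int_psmono)
qed

lemma mainO:
  assumes haar: "haar_orthogonal I \<mu>"
  defines "Dc \<equiv> of_nat (\<Prod>i<N. d i) :: complex"
  defines "sA \<equiv> \<lambda>A. of_nat (\<Prod>i\<in>A. d i) + of_nat (\<Prod>i\<in>{..<N} - A. d i) :: complex"
  defines "\<alpha> \<equiv> (\<Sum>A\<in>bipartitions N. (Dc * sA A - 2) / ((Dc - 1) * (Dc + 2)))"
  defines "\<beta> \<equiv> (\<Sum>A\<in>bipartitions N. (Dc + 1 - sA A) / ((Dc - 1) * (Dc + 2)))"
  shows "(\<integral>Q. entangling_power N d \<sigma> (\<lambda>x y. complex_of_real (Q x y)) \<partial>\<mu>) = 2 - (2 / ((2::real) ^ (N - 1) - 1)) *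
     Re (\<alpha> + (\<Prod>i<N. 2 / (of_nat (d i) + 1)) * \<beta>)"
proof -
  let ?G = "\<lambda>Q \<psi>. HH (matvec I (cmat I Q) (product_state N \<psi>))"
  have sG: "sepf \<mu> P ?G" by (rule sepGO[OF haar])
  have psmu: "prob_space \<mu>" using haar unfolding haar_orthogonal_def by auto
  have ep: "entangling_power N d \<sigma> (\<lambda>x y. complex_of_real (Q x y)) = 2 - (2 / ((2::real) ^ (N - 1) - 1)) * Re (\<integral>\<psi>. ?G Q \<psi> \<partial>P)" for Q
    unfolding entangling_power_def one_tangle_eq matvec_cmat by (rule int_affine[OF probP sep_int2[OF sG]])
  have "(\<integral>Q. entangling_power N d \<sigma> (\<lambda>x y. complex_of_real (Q x y)) \<partial>\<mu>) = 2 - (2 / ((2::real) ^ (N - 1) - 1)) * Re (\<integral>Q. (\<integral>\<psi>. ?G Q \<psi> \<partial>P) \<partial>\<mu>)"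
    unfolding ep by (rule int_affine[OF psmu sep_ii1[OF sG]])
  also have "(\<integral>Q. (\<integral>\<psi>. ?G Q \<psi> \<partial>P) \<partial>\<mu>) = (\<integral>\<psi>. (\<integral>Q. ?G Q \<psi> \<partial>\<mu>) \<partial>P)"
    by (rule sep_swap[OF sG])
  also have "\<dots> = (\<integral>\<psi>. \<alpha> + tsq (product_state N \<psi>) * \<beta> \<partial>P)"
  proof (rule integral_cong_AE)
    show "(\<lambda>\<psi>. \<integral>Q. ?G Q \<psi> \<partial>\<mu>) \<in> borel_measurable P"
      by (rule borel_measurable_integrable[OF sep_ii2[OF sG]])
    show "(\<lambda>\<psi>. \<alpha> + tsq (product_state N \<psi>) * \<beta>) \<in> borel_measurable P"
      using borel_measurable_integrable[OF ET(1)] by measurable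
    show "AE \<psi> in P. (\<integral>Q. ?G Q \<psi> \<partial>\<mu>) = \<alpha> + tsq (product_state N \<psi>) * \<beta>"
      using AE_unit
    proof eventually_elim
      case (elim \<psi>)
      let ?t = "tsq (product_state N \<psi>)"
      have pt: "(?t * (Dc + 1) - 2 + (Dc - ?t) * sA A) / ((Dc - 1) * (Dc + 2)) =
         (Dc * sA A - 2) / ((Dc - 1) * (Dc + 2)) + ?t * ((Dc + 1 - sA A) / ((Dc - 1) * (Dc + 2)))" for A
      proof -
        have "?t * (Dc + 1) - 2 + (Dc - ?t) * sA A = (Dc * sA A - 2) + ?t * (Dc + 1 - sA A)"
          by (simp add: algebra_simps)
        then show ?thesis by (rule lin_div)
      qed
      have "(\<integral>Q. ?G Q \<psi> \<partial>\<mu>) = (\<Sum>A\<in>bipartitions N. (?t * (Dc + 1) - 2 + (Dc - ?t) * sA A) / ((Dc - 1) * (Dc + 2)))"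
        by (simp only: innerO[OF haar elim] Dc_def sA_def)
      also have "\<dots> = (\<Sum>A\<in>bipartitions N. (Dc * sA A - 2) / ((Dc - 1) * (Dc + 2)) + ?t * ((Dc + 1 - sA A) / ((Dc - 1) * (Dc + 2))))"
        by (rule sum.cong[OF refl]) (rule pt)
      also have "\<dots> = \<alpha> + ?t * \<beta>" unfolding \<alpha>_def \<beta>_def by (simp only: sum.distrib sum_distrib_left)
      finally show ?case .
    qed
  qed
  also have "\<dots> = \<alpha> + (\<Prod>i<N. 2 / (of_nat (d i) + 1)) * \<beta>"
  proof -
    interpret prob_space P by (rule probP)
    have i1: "integrable P (\<lambda>\<psi>. tsq (product_state N \<psi>) * \<beta>)" using ET(1) by simp
    have "(\<integral>\<psi>. \<alpha> + tsq (product_state N \<psi>) * \<beta> \<partial>P) = (\<integral>\<psi>. \<alpha> \<partial>P) + (\<integral>\<psi>. tsq (product_state N \<psi>) * \<beta> \<partial>P)"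
      by (rule Bochner_Integration.integral_add[OF integrable_const i1])
    also have "(\<integral>\<psi>. \<alpha> \<partial>P) = \<alpha>" by (simp add: prob_space)
    also have "(\<integral>\<psi>. tsq (product_state N \<psi>) * \<beta> \<partial>P) = (\<integral>\<psi>. tsq (product_state N \<psi>) \<partial>P) * \<beta>"
      by (rule integral_mult_left_zero)
    finally show ?thesis unfolding ET(2) .
  qed
  finally show ?thesis .
qed

end


lemma final_algO0:
  fixes K D C B z den :: real
  assumes K: "K \<noteq> 0" and den: "den \<noteq> 0" and B: "B \<noteq> 0"
  shows "2 - (2 / K) * ((D * C - 2 * K) / den + z / B * ((K * (D + 1) - C) / den))
    = 2 * (1 - (1 / B) * ((z * (D + 1) - 2 * B + (B * D - z) / K * C) / den))"
  using K den B by (simp add: field_simps)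

lemma final_algO:
  fixes K D C B E :: real
  assumes K: "K \<noteq> 0" and den: "(D - 1) * (D + 2) \<noteq> 0" and B: "B \<noteq> 0" and E: "E = 2 ^ N / B"
  shows "2 - (2 / K) * ((D * C - 2 * K) / ((D - 1) * (D + 2)) + E * ((K * (D + 1) - C) / ((D - 1) * (D + 2))))
    = 2 * (1 - (1 / B) * ((2 ^ N * (D + 1) - 2 * B + (B * D - 2 ^ N) / K * C) / ((D - 1) * (D + 2))))"
  unfolding E by (rule final_algO0[OF K den B])

lemma final_algU:
  fixes K D C B :: real
  assumes K: "K \<noteq> 0" and D: "D + 1 \<noteq> 0" and B: "B \<noteq> 0"
  shows "2 - (2 / K) * (C / (D + 1)) = 2 * (1 - (1 / B) * (B * C / (K * (D + 1))))"
  using K D B by (simp add: field_simps)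

theorem mainTheorem10:
  fixes N :: nat and d :: "nat \<Rightarrow> nat"
    and \<sigma> :: "nat \<Rightarrow> (nat \<Rightarrow> complex) measure"
    and \<mu>U :: "((nat \<Rightarrow> nat) \<Rightarrow> (nat \<Rightarrow> nat) \<Rightarrow> complex) measure"
    and \<mu>O :: "((nat \<Rightarrow> nat) \<Rightarrow> (nat \<Rightarrow> nat) \<Rightarrow> real) measure"
  assumes "N \<ge> 2"
    and "\<forall>i<N. d i \<ge> 2"
    and "\<forall>i<N. uniform_sphere {..<d i} (\<sigma> i)"
    and "haar_unitary (basis_idx N d) \<mu>U"
    and "haar_orthogonal (basis_idx N d) \<mu>O"
  defines "D \<equiv> (\<Prod>i<N. real (d i))"
    and "B \<equiv> (\<Sum>s\<in>PiE {..<N} (\<lambda>_. {0::nat, 1}). \<Prod>i<N. real (d i) ^ s i)"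
    and "C \<equiv> (\<Sum>A\<in>bipartitions N. (\<Prod>i\<in>A. real (d i)) + (\<Prod>i\<in>{..<N} - A. real (d i)))"
  shows "((\<integral>Q. entangling_power N d \<sigma> (\<lambda>x y. complex_of_real (Q x y)) \<partial>\<mu>O) =
           2 * (1 - (\<Prod>i<N. 1 / (real (d i) + 1)) *
             ((2 ^ N * (D + 1) - 2 * B + (B * D - 2 ^ N) / (2 ^ (N - 1) - 1) * C)
              / ((D - 1) * (D + 2))))) \<and>
         ((\<integral>U. entangling_power N d \<sigma> U \<partial>\<mu>U) =
           2 * (1 - (\<Prod>i<N. 1 / (real (d i) + 1)) *
             (B * C / ((2 ^ (N - 1) - 1) * (D + 1)))))"
proof -
  interpret S: setup0 N d \<sigma> using assms(1-3) by unfold_locales auto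
  let ?K = "(2::real) ^ (N - 1) - 1"
  have K0: "?K \<noteq> 0" using S.Kpos by simp
  have cardK: "real (card (bipartitions N)) = ?K"
    using card_bip[of N] assms(1) by (simp add: of_nat_diff)
  have Bp: "B = (\<Prod>i<N. 1 + real (d i))"
  proof -
    have "(\<Prod>i<N. 1 + real (d i)) = (\<Prod>i<N. \<Sum>s\<in>{0::nat, 1}. real (d i) ^ s)" by simp
    also have "\<dots> = (\<Sum>s\<in>PiE {..<N} (\<lambda>_. {0::nat, 1}). \<Prod>i<N. real (d i) ^ s i)"
      by (rule prod_sum_PiE) auto
    finally show ?thesis unfolding B_def by simp
  qed
  have Bpos: "B > 0" unfolding Bp by (intro prod_pos) (simp add: add_pos_nonneg)
  have pB: "(\<Prod>i<N. 1 / (real (d i) + 1)) = 1 / B"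
    unfolding Bp by (simp add: prod_dividef add.commute)
  have Dge: "D \<ge> 2"
  proof -
    have n: "(\<Prod>i<N. d i) \<ge> 2" using S.cardI2 by (simp add: card_basis)
    have "real (\<Prod>i<N. d i) \<ge> 2" using n by (metis of_nat_le_iff of_nat_numeral)
    then show ?thesis unfolding D_def by (simp only: of_nat_prod)
  qed
  have hU: "haar_unitary (basis_idx N d) \<mu>U" and hO: "haar_orthogonal (basis_idx N d) \<mu>O" using assms by auto
  have U: "(\<integral>U. entangling_power N d \<sigma> U \<partial>\<mu>U) = 2 - (2 / ?K) * (C / (D + 1))"
    using S.mainU[OF hU] unfolding C_def D_def .
  have U': "(\<integral>U. entangling_power N d \<sigma> U \<partial>\<mu>U) =
           2 * (1 - (\<Prod>i<N. 1 / (real (d i) + 1)) * (B * C / ((2 ^ (N - 1) - 1) * (D + 1))))"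
    unfolding U pB by (rule final_algU[OF K0]) (use Dge Bpos in auto)
  define den where "den = (D - 1) * (D + 2)"
  have den0: "den \<noteq> 0" unfolding den_def using Dge by simp
  define sr where "sr = (\<lambda>A. (\<Prod>i\<in>A. real (d i)) + (\<Prod>i\<in>{..<N} - A. real (d i)))"
  define \<alpha>r where "\<alpha>r = (\<Sum>A\<in>bipartitions N. (D * sr A - 2) / den)"
  define \<beta>r where "\<beta>r = (\<Sum>A\<in>bipartitions N. (D + 1 - sr A) / den)"
  define Er where "Er = (\<Prod>i<N. 2 / (real (d i) + 1))"
  have O: "(\<integral>Q. entangling_power N d \<sigma> (\<lambda>x y. complex_of_real (Q x y)) \<partial>\<mu>O) = 2 - (2 / ?K) * (\<alpha>r + Er * \<beta>r)"
  proof -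
    have "(\<Sum>A\<in>bipartitions N. (of_nat (\<Prod>i<N. d i) * (of_nat (\<Prod>i\<in>A. d i) + of_nat (\<Prod>i\<in>{..<N} - A. d i)) - 2) /
            ((of_nat (\<Prod>i<N. d i) - 1) * (of_nat (\<Prod>i<N. d i) + 2))) +
          (\<Prod>i<N. 2 / (of_nat (d i) + 1)) *
          (\<Sum>A\<in>bipartitions N. (of_nat (\<Prod>i<N. d i) + 1 - (of_nat (\<Prod>i\<in>A. d i) + of_nat (\<Prod>i\<in>{..<N} - A. d i))) /
            ((of_nat (\<Prod>i<N. d i) - 1) * (of_nat (\<Prod>i<N. d i) + 2)))
        = complex_of_real (\<alpha>r + Er * \<beta>r)"
      unfolding \<alpha>r_def \<beta>r_def Er_def sr_def den_def D_def by simp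
    then show ?thesis using S.mainO[OF hO] by simp
  qed
  have ar: "\<alpha>r = (D * C - 2 * ?K) / den"
  proof -
    have "\<alpha>r = (\<Sum>A\<in>bipartitions N. D * sr A - 2) / den" unfolding \<alpha>r_def by (simp add: sum_divide_distrib)
    also have "(\<Sum>A\<in>bipartitions N. D * sr A - 2) = D * C - 2 * ?K"
      unfolding C_def sr_def by (simp add: sum_subtractf sum_distrib_left cardK)
    finally show ?thesis .
  qed
  have br: "\<beta>r = (?K * (D + 1) - C) / den"
  proof -
    have "\<beta>r = (\<Sum>A\<in>bipartitions N. D + 1 - sr A) / den" unfolding \<beta>r_def by (simp add: sum_divide_distrib)
    also have "(\<Sum>A\<in>bipartitions N. D + 1 - sr A) = ?K * (D + 1) - C"
      unfolding C_def sr_def by (simp add: sum_subtractf cardK)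
    finally show ?thesis .
  qed
  have Erv: "Er = 2 ^ N / B"
  proof -
    have "Er = (\<Prod>i<N. 2 * (1 / (real (d i) + 1)))" unfolding Er_def by simp
    also have "\<dots> = 2 ^ N * (1 / B)" by (simp only: prod.distrib pB) simp
    finally show ?thesis by simp
  qed
  have O': "(\<integral>Q. entangling_power N d \<sigma> (\<lambda>x y. complex_of_real (Q x y)) \<partial>\<mu>O) =
           2 * (1 - (\<Prod>i<N. 1 / (real (d i) + 1)) *
             ((2 ^ N * (D + 1) - 2 * B + (B * D - 2 ^ N) / (2 ^ (N - 1) - 1) * C)
              / ((D - 1) * (D + 2))))"
    unfolding O ar br pB den_def
    by (rule final_algO[OF K0 den0[unfolded den_def] _ Erv]) (use Bpos in simp)
  show ?thesis using U' O' by simp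
qed


end
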